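(* In the finite-eigenvalue setting below, for every bounded operator $X(s)$, $$\|\tilde X(s)\|\le\sqrt{m(s)}\,\frac{\|X(s)\|}{g(s)}.$$
   Context: Finite-eigenvalue setting: $H(s)$ is a bounded self-adjoint operator on a Hilbert space $\mathcal H$; $P(s)=\sum_{j=1}^{m(s)}P_j(s)$ where $P_j(s)$ are spectral projections of $H(s)$ for distinct eigenvalues $\lambda_1(s),\dots,\lambda_{m(s)}(s)$ (each possibly degenerate), and $g(s):=\operatorname{dist}(\{\lambda_j(s)\}_j,\sigma(H(s))\setminus\{\lambda_j(s)\}_j)>0$. $\Gamma(s)$ is a positively oriented contour enclosing $\lambda_1(s),\dots,\lambda_{m(s)}(s)$ and no other spectrum; $R_z=(H(s)-z)^{-1}$; $\tilde X(s):=\frac1{2\pi i}\oint_{\Gamma(s)}R_zX(s)R_z\,dz$. *)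

theory Defs
  imports "HOL-Complex_Analysis.Complex_Analysis"
begin

text \<open>HOL-Analysis only provides real inner product spaces, so the standard
  notions of complex normed space and complex inner product space are
  introduced here as type classes.  The inner product is linear in the
  second and conjugate-linear in the first argument.\<close>

class complex_vector = real_vector +
  fixes scaleC :: "complex \<Rightarrow> 'a \<Rightarrow> 'a" (infixr \<open>*\<^sub>C\<close> 75)
  assumes scaleC_add_right: "a *\<^sub>C (x + y) = a *\<^sub>C x + a *\<^sub>C y"
    and scaleC_add_left: "(a + b) *\<^sub>C x = a *\<^sub>C x + b *\<^sub>C x"
    and scaleC_scaleC: "a *\<^sub>C (b *\<^sub>C x) = (a * b) *\<^sub>C x"
    and scaleC_one: "1 *\<^sub>C x = x"
    and scaleR_scaleC: "r *\<^sub>R x = complex_of_real r *\<^sub>C x"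

class complex_normed_vector = complex_vector + real_normed_vector +
  assumes norm_scaleC: "norm (a *\<^sub>C x) = cmod a * norm x"

class complex_inner = complex_normed_vector +
  fixes cinner :: "'a \<Rightarrow> 'a \<Rightarrow> complex"
  assumes cinner_commute: "cinner x y = cnj (cinner y x)"
    and cinner_add_right: "cinner x (y + z) = cinner x y + cinner x z"
    and cinner_scaleC_right: "cinner x (a *\<^sub>C y) = a * cinner x y"
    and cinner_self_norm: "cinner x x = complex_of_real ((norm x)\<^sup>2)"

instantiation complex :: complex_inner
begin
definition scaleC_complex_def: "scaleC a (x::complex) = a * x"
definition cinner_complex_def: "cinner (x::complex) y = cnj x * y"
instance
proof
  fix a b :: complex and x y z :: complex and r :: real
  show "a *\<^sub>C (x + y) = a *\<^sub>C x + a *\<^sub>C y" by (simp add: scaleC_complex_def algebra_simps)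
  show "(a + b) *\<^sub>C x = a *\<^sub>C x + b *\<^sub>C x" by (simp add: scaleC_complex_def algebra_simps)
  show "a *\<^sub>C (b *\<^sub>C x) = (a * b) *\<^sub>C x" by (simp add: scaleC_complex_def)
  show "1 *\<^sub>C x = x" by (simp add: scaleC_complex_def)
  show "r *\<^sub>R x = complex_of_real r *\<^sub>C x" by (simp add: scaleC_complex_def scaleR_conv_of_real)
  show "norm (a *\<^sub>C x) = cmod a * norm x" by (simp add: scaleC_complex_def norm_mult)
  show "cinner x y = cnj (cinner y x)" by (simp add: cinner_complex_def)
  show "cinner x (y + z) = cinner x y + cinner x z" by (simp add: cinner_complex_def algebra_simps)
  show "cinner x (a *\<^sub>C y) = a * cinner x y" by (simp add: cinner_complex_def scaleC_complex_def)
  show "cinner x x = complex_of_real ((norm x)\<^sup>2)"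
    by (simp add: cinner_complex_def mult.commute flip: complex_norm_square of_real_power)
qed
end

text \<open>Bounded operators on a complex space are represented as elements of
  \<open>'a \<Rightarrow>\<^sub>L 'a\<close> (bounded real-linear maps, with the operator norm) that are
  in addition complex-linear.\<close>

definition clinear_op :: "('a::complex_normed_vector \<Rightarrow>\<^sub>L 'b::complex_normed_vector) \<Rightarrow> bool" where
  "clinear_op A \<longleftrightarrow> (\<forall>c x. blinfun_apply A (c *\<^sub>C x) = c *\<^sub>C blinfun_apply A x)"

definition cscaleL :: "complex \<Rightarrow> ('a::complex_normed_vector \<Rightarrow>\<^sub>L 'b::complex_normed_vector) \<Rightarrow> ('a \<Rightarrow>\<^sub>L 'b)" where
  "cscaleL c A = Blinfun (\<lambda>x. c *\<^sub>C blinfun_apply A x)"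

definition self_adjoint_op :: "('a::complex_inner \<Rightarrow>\<^sub>L 'a) \<Rightarrow> bool" where
  "self_adjoint_op H \<longleftrightarrow> clinear_op H \<and>
     (\<forall>x y. cinner (blinfun_apply H x) y = cinner x (blinfun_apply H y))"

definition invertible_op :: "('a::complex_normed_vector \<Rightarrow>\<^sub>L 'a) \<Rightarrow> bool" where
  "invertible_op A \<longleftrightarrow> (\<exists>B. B o\<^sub>L A = id_blinfun \<and> A o\<^sub>L B = id_blinfun)"

definition inverse_op :: "('a::complex_normed_vector \<Rightarrow>\<^sub>L 'a) \<Rightarrow> ('a \<Rightarrow>\<^sub>L 'a)" where
  "inverse_op A = (THE B. B o\<^sub>L A = id_blinfun \<and> A o\<^sub>L B = id_blinfun)"

definition op_spectrum :: "('a::complex_normed_vector \<Rightarrow>\<^sub>L 'a) \<Rightarrow> complex set" where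
  "op_spectrum H = {z. \<not> invertible_op (H - cscaleL z id_blinfun)}"

definition is_eigenvalue :: "('a::complex_normed_vector \<Rightarrow>\<^sub>L 'a) \<Rightarrow> complex \<Rightarrow> bool" where
  "is_eigenvalue H \<mu> \<longleftrightarrow> (\<exists>x. x \<noteq> 0 \<and> blinfun_apply H x = \<mu> *\<^sub>C x)"

definition resolvent :: "('a::complex_normed_vector \<Rightarrow>\<^sub>L 'a) \<Rightarrow> complex \<Rightarrow> ('a \<Rightarrow>\<^sub>L 'a)" where
  "resolvent H z = inverse_op (H - cscaleL z id_blinfun)"

text \<open>Contour integral of an operator-valued function along a path
  \<open>\<gamma> :: real \<Rightarrow> complex\<close> parametrised over \<open>[0,1]\<close>, in the same way as the
  library's \<open>has_contour_integral\<close> (Bochner/Henstock integral in the Banach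
  space of operators).\<close>
definition op_contour_integral ::
  "(complex \<Rightarrow> ('a::complex_normed_vector \<Rightarrow>\<^sub>L 'b::complex_normed_vector)) \<Rightarrow> (real \<Rightarrow> complex) \<Rightarrow> ('a \<Rightarrow>\<^sub>L 'b)" where
  "op_contour_integral f \<gamma> =
     integral {0..1} (\<lambda>t. cscaleL (vector_derivative \<gamma> (at t within {0..1})) (f (\<gamma> t)))"

definition tilde_op ::
  "('a::complex_normed_vector \<Rightarrow>\<^sub>L 'a) \<Rightarrow> (real \<Rightarrow> complex) \<Rightarrow> ('a \<Rightarrow>\<^sub>L 'a) \<Rightarrow> ('a \<Rightarrow>\<^sub>L 'a)" where
  "tilde_op H \<Gamma> X = cscaleL (1 / (2 * of_real pi * \<i>))
     (op_contour_integral (\<lambda>z. resolvent H z o\<^sub>L X o\<^sub>L resolvent H z) \<Gamma>)"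

end

theory Submission
  imports Defs
begin

lemma scaleC_zero_right[simp]: "a *\<^sub>C (0::'a::complex_vector) = 0"
  using scaleC_add_right[of a "0::'a" 0] by simp
lemma scaleC_zero_left[simp]: "(0::complex) *\<^sub>C (x::'a::complex_vector) = 0"
  using scaleC_add_left[of 0 0 x] by simp
lemma scaleC_minus_right: "a *\<^sub>C (- (x::'a::complex_vector)) = - (a *\<^sub>C x)"
  using scaleC_add_right[of a x "-x"] by (simp add: eq_neg_iff_add_eq_0 add.commute)
lemma scaleC_diff_right: "a *\<^sub>C ((x::'a::complex_vector) - y) = a *\<^sub>C x - a *\<^sub>C y"
  by (simp only: diff_conv_add_uminus scaleC_add_right scaleC_minus_right)
lemma scaleC_minus_left: "(- a) *\<^sub>C (x::'a::complex_vector) = - (a *\<^sub>C x)"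
  using scaleC_add_left[of a "-a" x] by (simp add: eq_neg_iff_add_eq_0 add.commute)
lemma scaleC_diff_left: "(a - b) *\<^sub>C (x::'a::complex_vector) = a *\<^sub>C x - b *\<^sub>C x"
  by (simp only: diff_conv_add_uminus scaleC_add_left scaleC_minus_left)
lemma scaleC_of_real: "complex_of_real r *\<^sub>C (x::'a::complex_vector) = r *\<^sub>R x"
  by (simp add: scaleR_scaleC)
lemma scaleC_scaleR_comm: "a *\<^sub>C (r *\<^sub>R (x::'a::complex_vector)) = r *\<^sub>R (a *\<^sub>C x)"
  by (simp add: scaleR_scaleC scaleC_scaleC mult.commute)
lemma scaleC_sum_right: "a *\<^sub>C (\<Sum>i\<in>I. f i) = (\<Sum>i\<in>I. a *\<^sub>C (f i::'a::complex_vector))"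
  by (induction I rule: infinite_finite_induct) (auto simp: scaleC_add_right)
lemma scaleC_eq_0_iff: "(a *\<^sub>C (x::'a::complex_vector) = 0) \<longleftrightarrow> a = 0 \<or> x = 0"
proof
  assume h: "a *\<^sub>C x = 0"
  show "a = 0 \<or> x = 0"
  proof (cases "a = 0")
    case False
    have "x = (inverse a * a) *\<^sub>C x" using False by (simp add: scaleC_one)
    also have "\<dots> = inverse a *\<^sub>C (a *\<^sub>C x)" by (simp add: scaleC_scaleC)
    finally show ?thesis using h by simp
  qed simp
qed auto

lemma bounded_linear_scaleC: "bounded_linear (\<lambda>x::'a::complex_normed_vector. a *\<^sub>C x)"
  by (rule bounded_linear_intro[where K="cmod a"])
     (auto simp: scaleC_add_right scaleC_scaleR_comm norm_scaleC)

lemma cinner_add_left: "cinner (x + y) (z::'a::complex_inner) = cinner x z + cinner y z"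
  by (subst (1 2 3) cinner_commute) (simp add: cinner_add_right)
lemma cinner_scaleC_left: "cinner (a *\<^sub>C x) (y::'a::complex_inner) = cnj a * cinner x y"
  by (subst (1 2) cinner_commute) (simp add: cinner_scaleC_right)
lemma cinner_zero_right[simp]: "cinner x (0::'a::complex_inner) = 0"
  using cinner_add_right[of x "0::'a" 0] by simp
lemma cinner_zero_left[simp]: "cinner (0::'a::complex_inner) x = 0"
  using cinner_add_left[of "0::'a" 0 x] by simp
lemma cinner_minus_right: "cinner x (- (y::'a::complex_inner)) = - cinner x y"
  using cinner_add_right[of x y "-y"] by (simp add: eq_neg_iff_add_eq_0 add.commute)
lemma cinner_minus_left: "cinner (- x) (y::'a::complex_inner) = - cinner x y"
  using cinner_add_left[of x "-x" y] by (simp add: eq_neg_iff_add_eq_0 add.commute)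
lemma cinner_diff_right: "cinner x ((y::'a::complex_inner) - z) = cinner x y - cinner x z"
  by (simp only: diff_conv_add_uminus cinner_add_right cinner_minus_right)
lemma cinner_diff_left: "cinner ((x::'a::complex_inner) - y) z = cinner x z - cinner y z"
  by (simp only: diff_conv_add_uminus cinner_add_left cinner_minus_left)
lemma cinner_scaleR_right: "cinner x (r *\<^sub>R (y::'a::complex_inner)) = complex_of_real r * cinner x y"
  by (simp add: scaleR_scaleC cinner_scaleC_right)
lemma cinner_scaleR_left: "cinner (r *\<^sub>R x) (y::'a::complex_inner) = complex_of_real r * cinner x y"
  by (simp add: scaleR_scaleC cinner_scaleC_left)
lemma cinner_sum_right: "cinner x (\<Sum>i\<in>I. f i) = (\<Sum>i\<in>I. cinner x (f i::'a::complex_inner))"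
  by (induction I rule: infinite_finite_induct) (auto simp: cinner_add_right)
lemma cinner_sum_left: "cinner (\<Sum>i\<in>I. f i) x = (\<Sum>i\<in>I. cinner (f i::'a::complex_inner) x)"
  by (induction I rule: infinite_finite_induct) (auto simp: cinner_add_left)

lemma cinner_self: "cinner x (x::'a::complex_inner) = complex_of_real ((norm x)^2)"
  by (rule cinner_self_norm)
lemma Re_cinner_self: "Re (cinner x (x::'a::complex_inner)) = (norm x)^2"
  by (metis Re_complex_of_real cinner_self_norm)
lemma cmod_cinner_self: "cmod (cinner x (x::'a::complex_inner)) = (norm x)^2"
  unfolding cinner_self_norm norm_of_real by simp
lemma cinner_self_eq_0: "cinner x (x::'a::complex_inner) = 0 \<longleftrightarrow> x = 0"
  by (simp add: cinner_self_norm)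

lemma norm_add_sq: "(norm ((x::'a::complex_inner) + y))^2 = (norm x)^2 + (norm y)^2 + 2 * Re (cinner x y)"
proof -
  have "(norm (x+y))^2 = Re (cinner (x+y) (x+y))" by (simp only: Re_cinner_self)
  also have "\<dots> = Re (cinner x x + cinner y x + (cinner x y + cinner y y))"
    by (simp only: cinner_add_left cinner_add_right)
  also have "\<dots> = (norm x)^2 + (norm y)^2 + 2 * Re (cinner x y)"
  proof -
    have "Re (cinner y x) = Re (cinner x y)" by (subst cinner_commute) simp
    thus ?thesis by (simp add: Re_cinner_self)
  qed
  finally show ?thesis .
qed

lemma norm_diff_sq: "(norm ((x::'a::complex_inner) - y))^2 = (norm x)^2 + (norm y)^2 - 2 * Re (cinner x y)"
  using norm_add_sq[of x "-y"] by (simp add: cinner_minus_right)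

lemma Re_cinner_le: "Re (cinner x (y::'a::complex_inner)) \<le> norm x * norm y"
proof (cases "norm x * norm y = 0")
  case True
  then show ?thesis by auto
next
  case False
  hence pos: "norm x * norm y > 0" by (simp add: less_le)
  have "0 \<le> (norm (norm y *\<^sub>R x - norm x *\<^sub>R y))^2" by simp
  also have "\<dots> = (norm y)^2 * (norm x)^2 + (norm x)^2 * (norm y)^2 - 2 * (norm x * norm y) * Re (cinner x y)"
    by (simp add: norm_diff_sq cinner_scaleR_left cinner_scaleR_right power_mult_distrib)
  finally have "2 * (norm x * norm y) * Re (cinner x y) \<le> 2 * (norm x * norm y) * (norm x * norm y)"
    by (simp add: power2_eq_square algebra_simps)
  hence "(norm x * norm y) * Re (cinner x y) \<le> (norm x * norm y) * (norm x * norm y)" by linarith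
  thus ?thesis using mult_left_le_imp_le[OF _ pos] by blast
qed

lemma cinner_Cauchy_Schwarz: "cmod (cinner x (y::'a::complex_inner)) \<le> norm x * norm y"
proof (cases "cinner x y = 0")
  case True then show ?thesis by simp
next
  case False
  define c where "c = cinner x y"
  define a where "a = cnj c / complex_of_real (cmod c)"
  have cm: "cmod a = 1" using False by (simp add: a_def c_def norm_divide)
  have cc: "cnj c * c = complex_of_real ((cmod c)^2)" by (subst complex_norm_square) (rule mult.commute)
  have "cinner x (a *\<^sub>C y) = complex_of_real (cmod c)"
    using False by (simp add: cinner_scaleC_right a_def c_def[symmetric] cc power2_eq_square)
  hence "cmod c = Re (cinner x (a *\<^sub>C y))" by simp
  also have "\<dots> \<le> norm x * norm (a *\<^sub>C y)" by (rule Re_cinner_le)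
  also have "\<dots> = norm x * norm y" by (simp add: norm_scaleC cm)
  finally show ?thesis by (simp add: c_def)
qed

lemma bounded_bilinear_cinner: "bounded_bilinear (cinner :: 'a::complex_inner \<Rightarrow> 'a \<Rightarrow> complex)"
proof
  fix a a' b b' :: 'a and r :: real
  show "cinner (a + a') b = cinner a b + cinner a' b" by (rule cinner_add_left)
  show "cinner a (b + b') = cinner a b + cinner a b'" by (rule cinner_add_right)
  show "cinner (r *\<^sub>R a) b = r *\<^sub>R cinner a b" by (simp add: cinner_scaleR_left scaleR_conv_of_real)
  show "cinner a (r *\<^sub>R b) = r *\<^sub>R cinner a b" by (simp add: cinner_scaleR_right scaleR_conv_of_real)
next
  show "\<exists>K. \<forall>a b::'a. norm (cinner a b) \<le> norm a * norm b * K"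
  proof (rule exI[of _ 1], intro allI)
    fix a b :: 'a
    show "norm (cinner a b) \<le> norm a * norm b * 1" using cinner_Cauchy_Schwarz[of a b] by simp
  qed
qed

lemmas tendsto_cinner[tendsto_intros] = bounded_bilinear.tendsto[OF bounded_bilinear_cinner]
lemmas continuous_cinner[continuous_intros] = bounded_bilinear.continuous[OF bounded_bilinear_cinner]
lemmas continuous_on_cinner[continuous_intros] = bounded_bilinear.continuous_on[OF bounded_bilinear_cinner]

lemma cinner_eq_zero_all: "(\<forall>y. cinner y (x::'a::complex_inner) = 0) \<Longrightarrow> x = 0"
proof -
  assume h: "\<forall>y. cinner y x = 0"
  have "cinner x x = 0" using h by (rule spec)
  thus "x = 0" by (simp only: cinner_self_eq_0)
qed

lemma norm_pythag: "cinner x (y::'a::complex_inner) = 0 \<Longrightarrow> (norm (x + y))^2 = (norm x)^2 + (norm y)^2"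
  by (simp add: norm_add_sq)

lemma norm_le_from_cinner:
  assumes "\<And>u. cmod (cinner u (x::'a::complex_inner)) \<le> K * norm u" and "K \<ge> 0"
  shows "norm x \<le> K"
proof -
  have "(norm x)^2 \<le> K * norm x" using assms(1)[of x] by (simp only: cmod_cinner_self)
  hence h: "norm x * norm x \<le> K * norm x" by (simp only: power2_eq_square)
  show ?thesis
  proof (cases "norm x = 0")
    case True thus ?thesis using assms(2) by simp
  next
    case False hence "norm x > 0" by simp
    thus ?thesis by (rule mult_right_le_imp_le[OF h])
  qed
qed

lemma bounded_linear_cscale_fun: "bounded_linear (\<lambda>x. c *\<^sub>C blinfun_apply (A::'a::real_normed_vector \<Rightarrow>\<^sub>L 'b::complex_normed_vector) x)"
  using bounded_linear_compose[OF bounded_linear_scaleC[of c] blinfun.bounded_linear_right[of A]] by simp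

lemma cscaleL_apply[simp]: "blinfun_apply (cscaleL c A) x = c *\<^sub>C blinfun_apply A x"
  unfolding cscaleL_def by (simp add: bounded_linear_Blinfun_apply[OF bounded_linear_cscale_fun])

lemma norm_cscaleL: "norm (cscaleL c A) \<le> cmod c * norm A"
  by (rule norm_blinfun_bound) (auto simp: norm_scaleC mult.assoc intro!: mult_left_mono norm_blinfun)

lemma clinear_opD: "clinear_op A \<Longrightarrow> blinfun_apply A (c *\<^sub>C x) = c *\<^sub>C blinfun_apply A x"
  by (simp add: clinear_op_def)

lemma clinear_id[simp]: "clinear_op (id_blinfun::'a::complex_normed_vector \<Rightarrow>\<^sub>L 'a)"
  by (simp add: clinear_op_def)
lemma clinear_zero[simp]: "clinear_op (0::'a::complex_normed_vector \<Rightarrow>\<^sub>L 'b::complex_normed_vector)"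
  by (simp add: clinear_op_def)
lemma clinear_compose: "clinear_op A \<Longrightarrow> clinear_op B \<Longrightarrow> clinear_op (A o\<^sub>L B)"
  by (simp add: clinear_op_def)
lemma clinear_add: "clinear_op A \<Longrightarrow> clinear_op B \<Longrightarrow> clinear_op (A + B)"
  by (simp add: clinear_op_def blinfun.add_left scaleC_add_right)
lemma clinear_diff: "clinear_op A \<Longrightarrow> clinear_op B \<Longrightarrow> clinear_op (A - B)"
  by (simp add: clinear_op_def blinfun.diff_left scaleC_diff_right)
lemma clinear_cscaleL: "clinear_op A \<Longrightarrow> clinear_op (cscaleL c A)"
  by (simp add: clinear_op_def scaleC_scaleC mult.commute)
lemma clinear_sum: "(\<And>i. i \<in> I \<Longrightarrow> clinear_op (A i)) \<Longrightarrow> clinear_op (\<Sum>i\<in>I. A i)"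
  by (induction I rule: infinite_finite_induct) (auto intro: clinear_add)

lemma shift_apply: "blinfun_apply (H - cscaleL z id_blinfun) x = blinfun_apply H x - z *\<^sub>C x"
  by (simp add: blinfun.diff_left)

lemma clinear_shift: "clinear_op H \<Longrightarrow> clinear_op (H - cscaleL z id_blinfun)"
  by (intro clinear_diff clinear_cscaleL clinear_id)

lemma blinfun_apply_sum: "blinfun_apply (\<Sum>i\<in>I. A i) x = (\<Sum>i\<in>I. blinfun_apply (A i) x)"
  by (induction I rule: infinite_finite_induct) (auto simp: blinfun.add_left)

lemma compose_id_apply: "A o\<^sub>L B = id_blinfun \<Longrightarrow> blinfun_apply A (blinfun_apply B x) = x"
  by (metis blinfun_apply_blinfun_compose blinfun_apply_id_blinfun id_apply)

lemma inverse_op_unique: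
  assumes "B o\<^sub>L A = id_blinfun" "A o\<^sub>L B = id_blinfun"
  shows "inverse_op A = B"
  unfolding inverse_op_def
proof (rule the_equality)
  show "B o\<^sub>L A = id_blinfun \<and> A o\<^sub>L B = id_blinfun" using assms ..
next
  fix C assume "C o\<^sub>L A = id_blinfun \<and> A o\<^sub>L C = id_blinfun"
  hence c: "\<And>x. blinfun_apply C (blinfun_apply A x) = x" by (auto intro: compose_id_apply)
  show "C = B"
  proof (rule blinfun_eqI)
    fix x
    have "blinfun_apply C x = blinfun_apply C (blinfun_apply A (blinfun_apply B x))"
      using compose_id_apply[OF assms(2)] by simp
    also have "\<dots> = blinfun_apply B x" using c by simp
    finally show "blinfun_apply C x = blinfun_apply B x" .
  qed
qed

lemma invertible_opI:
  assumes "\<And>x. blinfun_apply A (blinfun_apply B x) = x" "\<And>x. blinfun_apply B (blinfun_apply A x) = x"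
  shows "invertible_op A" "inverse_op A = B"
proof -
  have 1: "B o\<^sub>L A = id_blinfun" "A o\<^sub>L B = id_blinfun" by (auto intro!: blinfun_eqI simp: assms)
  thus "invertible_op A" unfolding invertible_op_def by blast
  show "inverse_op A = B" using 1 by (rule inverse_op_unique)
qed

lemma inverse_op_props:
  assumes "invertible_op A"
  shows "inverse_op A o\<^sub>L A = id_blinfun" "A o\<^sub>L inverse_op A = id_blinfun"
proof -
  obtain B where "B o\<^sub>L A = id_blinfun" "A o\<^sub>L B = id_blinfun" using assms unfolding invertible_op_def by blast
  moreover have "inverse_op A = B" using calculation by (rule inverse_op_unique)
  ultimately show "inverse_op A o\<^sub>L A = id_blinfun" "A o\<^sub>L inverse_op A = id_blinfun" by simp_all
qed

lemma inverse_op_left[simp]: "invertible_op A \<Longrightarrow> blinfun_apply (inverse_op A) (blinfun_apply A x) = x"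
  using inverse_op_props(1) compose_id_apply by blast
lemma inverse_op_right[simp]: "invertible_op A \<Longrightarrow> blinfun_apply A (blinfun_apply (inverse_op A) x) = x"
  using inverse_op_props(2) compose_id_apply by blast

lemma clinear_inverse:
  assumes "clinear_op A" "invertible_op A"
  shows "clinear_op (inverse_op A)"
  unfolding clinear_op_def
proof (intro allI)
  fix c x
  have "blinfun_apply (inverse_op A) (c *\<^sub>C x) = blinfun_apply (inverse_op A) (c *\<^sub>C blinfun_apply A (blinfun_apply (inverse_op A) x))"
    using assms by simp
  also have "\<dots> = blinfun_apply (inverse_op A) (blinfun_apply A (c *\<^sub>C blinfun_apply (inverse_op A) x))"
    using assms by (simp add: clinear_opD)
  also have "\<dots> = c *\<^sub>C blinfun_apply (inverse_op A) x" using assms by simp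
  finally show "blinfun_apply (inverse_op A) (c *\<^sub>C x) = c *\<^sub>C blinfun_apply (inverse_op A) x" .
qed

lemma invertible_compose:
  assumes "invertible_op A" "invertible_op B"
  shows "invertible_op (A o\<^sub>L B)" "inverse_op (A o\<^sub>L B) = inverse_op B o\<^sub>L inverse_op A"
  using invertible_opI[of "A o\<^sub>L B" "inverse_op B o\<^sub>L inverse_op A"] assms by simp_all

lemma invertible_bounded_below:
  assumes "invertible_op A"
  shows "norm x \<le> norm (inverse_op A) * norm (blinfun_apply A x)"
  using norm_blinfun[of "inverse_op A" "blinfun_apply A x"] assms by simp

lemma invertible_inj: "invertible_op A \<Longrightarrow> blinfun_apply A x = 0 \<Longrightarrow> x = 0"
  by (metis blinfun.zero_right inverse_op_left)

lemma neumann: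
  fixes A :: "'a::{complex_normed_vector, complete_space} \<Rightarrow>\<^sub>L 'a"
  assumes nA: "norm A < 1"
  shows "invertible_op (id_blinfun - A)" "norm (inverse_op (id_blinfun - A)) \<le> 1 / (1 - norm A)"
proof -
  have ex: "\<exists>!y. x + blinfun_apply A y = y" for x
  proof (rule banach_fix_type[of "norm A"])
    show "\<forall>u v. dist (x + blinfun_apply A u) (x + blinfun_apply A v) \<le> norm A * dist u v"
      by (auto simp: dist_norm blinfun.diff_right[symmetric] norm_blinfun)
  qed (use nA in auto)
  define S where "S x = (THE y. x + blinfun_apply A y = y)" for x
  have Sfix: "x + blinfun_apply A (S x) = S x" for x
    unfolding S_def using theI'[OF ex[of x]] by simp
  have Suniq: "x + blinfun_apply A y = y \<Longrightarrow> S x = y" for x y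
    using ex[of x] Sfix[of x] by blast
  have Sadd: "S (x + y) = S x + S y" for x y
    by (rule Suniq) (metis Sfix add.assoc add.left_commute blinfun.add_right)
  have Sscale: "S (r *\<^sub>R x) = r *\<^sub>R S x" for r x
    by (rule Suniq) (metis Sfix blinfun.scaleR_right scaleR_add_right)
  have Snorm: "norm (S x) \<le> norm x * (1 / (1 - norm A))" for x
  proof -
    have "norm (S x) \<le> norm x + norm A * norm (S x)"
      using Sfix[of x] norm_triangle_ineq[of x "blinfun_apply A (S x)"] norm_blinfun[of A "S x"] by simp
    hence "(1 - norm A) * norm (S x) \<le> norm x" by (simp add: algebra_simps)
    thus ?thesis using nA by (simp add: field_simps)
  qed
  have bl: "bounded_linear S"
    by (rule bounded_linear_intro[OF Sadd Sscale Snorm])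
  have a1: "\<And>x. blinfun_apply (id_blinfun - A) (blinfun_apply (Blinfun S) x) = x"
    using Sfix by (simp add: bounded_linear_Blinfun_apply[OF bl] blinfun.diff_left algebra_simps)
  have a2: "\<And>x. blinfun_apply (Blinfun S) (blinfun_apply (id_blinfun - A) x) = x"
    by (simp add: bounded_linear_Blinfun_apply[OF bl] blinfun.diff_left) (rule Suniq, simp)
  show "invertible_op (id_blinfun - A)" using invertible_opI(1)[OF a1 a2] .
  have inv: "inverse_op (id_blinfun - A) = Blinfun S" using invertible_opI(2)[OF a1 a2] .
  have "norm (Blinfun S) \<le> 1 / (1 - norm A)"
    by (rule norm_blinfun_bound) (use nA Snorm in \<open>auto simp: bounded_linear_Blinfun_apply[OF bl] mult.commute\<close>)
  thus "norm (inverse_op (id_blinfun - A)) \<le> 1 / (1 - norm A)" using inv by simp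
qed

lemma res_left: "z \<notin> op_spectrum H \<Longrightarrow>
   blinfun_apply H (blinfun_apply (resolvent H z) x) - z *\<^sub>C blinfun_apply (resolvent H z) x = x"
  using inverse_op_right[of "H - cscaleL z id_blinfun" x] by (simp add: resolvent_def op_spectrum_def shift_apply)
lemma res_right: "z \<notin> op_spectrum H \<Longrightarrow>
   blinfun_apply (resolvent H z) (blinfun_apply H x - z *\<^sub>C x) = x"
  using inverse_op_left[of "H - cscaleL z id_blinfun" x] by (simp add: resolvent_def op_spectrum_def shift_apply)
lemma clinear_res: "clinear_op H \<Longrightarrow> z \<notin> op_spectrum H \<Longrightarrow> clinear_op (resolvent H z)"
  unfolding resolvent_def by (rule clinear_inverse) (auto simp: op_spectrum_def clinear_shift)

lemma res_identity:
  assumes H: "clinear_op H" and z: "z \<notin> op_spectrum H" and w: "w \<notin> op_spectrum H"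
  shows "blinfun_apply (resolvent H w) x - blinfun_apply (resolvent H z) x
       = (w - z) *\<^sub>C blinfun_apply (resolvent H w) (blinfun_apply (resolvent H z) x)"
proof -
  define y where "y = blinfun_apply (resolvent H z) x"
  have x: "x = blinfun_apply H y - z *\<^sub>C y" using res_left[OF z] y_def by simp
  have x2: "x = (blinfun_apply H y - w *\<^sub>C y) + (w - z) *\<^sub>C y"
    by (subst x) (simp add: scaleC_diff_left algebra_simps)
  have "blinfun_apply (resolvent H w) x
      = blinfun_apply (resolvent H w) (blinfun_apply H y - w *\<^sub>C y) + blinfun_apply (resolvent H w) ((w - z) *\<^sub>C y)"
    by (subst x2) (rule blinfun.add_right)
  also have "\<dots> = y + (w - z) *\<^sub>C blinfun_apply (resolvent H w) y"
    using res_right[OF w] clinear_opD[OF clinear_res[OF H w]] by simp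
  finally show ?thesis unfolding y_def by simp
qed

lemma res_perturb:
  fixes H :: "'a::{complex_normed_vector,complete_space} \<Rightarrow>\<^sub>L 'a"
  assumes H: "clinear_op H" and z: "z \<notin> op_spectrum H"
    and small: "cmod (w - z) * norm (resolvent H z) < 1"
  shows "w \<notin> op_spectrum H"
    "norm (resolvent H w) \<le> norm (resolvent H z) / (1 - cmod (w - z) * norm (resolvent H z))"
proof -
  define R where "R = resolvent H z"
  define A where "A = cscaleL (w - z) R"
  have nA: "norm A \<le> cmod (w - z) * norm R" unfolding A_def by (rule norm_cscaleL)
  have sm: "cmod (w - z) * norm R < 1" using small R_def by simp
  have nA1: "norm A < 1" using nA sm by linarith
  have inv1: "invertible_op (id_blinfun - A)" using neumann(1)[OF nA1] .
  define K where "K = H - cscaleL z id_blinfun"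
  have invz: "invertible_op K" using z by (simp add: op_spectrum_def K_def)
  have cl: "clinear_op K" using H unfolding K_def by (rule clinear_shift)
  have eq: "H - cscaleL w id_blinfun = K o\<^sub>L (id_blinfun - A)"
  proof (rule blinfun_eqI)
    fix y
    have "blinfun_apply (K o\<^sub>L (id_blinfun - A)) y
        = blinfun_apply K y - (w - z) *\<^sub>C blinfun_apply K (blinfun_apply R y)"
      by (simp only: blinfun_apply_blinfun_compose blinfun.diff_left blinfun_apply_id_blinfun id_apply
          A_def cscaleL_apply blinfun.diff_right clinear_opD[OF cl])
    also have "\<dots> = blinfun_apply K y - (w - z) *\<^sub>C y"
      using inverse_op_right[OF invz] by (simp add: R_def resolvent_def K_def)
    also have "\<dots> = blinfun_apply (H - cscaleL w id_blinfun) y"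
      by (simp add: K_def shift_apply scaleC_diff_left algebra_simps)
    finally show "blinfun_apply (H - cscaleL w id_blinfun) y
        = blinfun_apply (K o\<^sub>L (id_blinfun - A)) y" by simp
  qed
  have invw: "invertible_op (H - cscaleL w id_blinfun)"
    unfolding eq by (rule invertible_compose(1)[OF invz inv1])
  thus "w \<notin> op_spectrum H" by (simp add: op_spectrum_def)
  have "resolvent H w = inverse_op (id_blinfun - A) o\<^sub>L R"
    unfolding resolvent_def eq R_def K_def[symmetric] by (rule invertible_compose(2)[OF invz inv1])
  hence "norm (resolvent H w) \<le> norm (inverse_op (id_blinfun - A)) * norm R"
    by (simp add: norm_blinfun_compose)
  also have "\<dots> \<le> (1 / (1 - norm A)) * norm R"
    by (rule mult_right_mono[OF neumann(2)[OF nA1]]) simp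
  also have "\<dots> \<le> (1 / (1 - cmod (w - z) * norm R)) * norm R"
  proof (rule mult_right_mono)
    show "1 / (1 - norm A) \<le> 1 / (1 - cmod (w - z) * norm R)"
      by (rule divide_left_mono) (use nA sm nA1 in auto)
  qed simp
  finally show "norm (resolvent H w) \<le> norm (resolvent H z) / (1 - cmod (w - z) * norm (resolvent H z))"
    by (simp add: R_def)
qed

lemma open_resolvent_set:
  fixes H :: "'a::{complex_normed_vector,complete_space} \<Rightarrow>\<^sub>L 'a"
  assumes H: "clinear_op H" shows "open (- op_spectrum H)"
proof (rule openI)
  fix z assume z: "z \<in> - op_spectrum H"
  define N where "N = norm (resolvent H z)"
  define e where "e = 1 / (N + 1)"
  have N0: "N \<ge> 0" by (simp add: N_def)
  have e0: "e > 0" using N0 by (simp add: e_def)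
  moreover have "ball z e \<subseteq> - op_spectrum H"
  proof
    fix w assume "w \<in> ball z e"
    hence d: "cmod (w - z) < e" by (simp add: dist_norm norm_minus_commute)
    have "cmod (w - z) * N \<le> e * N" using d N0 by (simp add: mult_right_mono)
    also have "e * N < 1" using N0 by (simp add: e_def field_simps)
    finally show "w \<in> - op_spectrum H" using res_perturb(1)[OF H] z N_def by auto
  qed
  ultimately show "\<exists>e>0. ball z e \<subseteq> - op_spectrum H" by blast
qed

lemma res_diff_norm:
  assumes H: "clinear_op H" and z: "z \<notin> op_spectrum H" and w: "w \<notin> op_spectrum H"
  shows "norm (resolvent H w - resolvent H z) \<le> cmod (w - z) * norm (resolvent H w) * norm (resolvent H z)"
proof (rule norm_blinfun_bound)
  fix x
  have "norm (blinfun_apply (resolvent H w - resolvent H z) x)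
      = cmod (w - z) * norm (blinfun_apply (resolvent H w) (blinfun_apply (resolvent H z) x))"
    by (simp add: blinfun.diff_left res_identity[OF H z w] norm_scaleC)
  also have "\<dots> \<le> cmod (w - z) * (norm (resolvent H w) * (norm (resolvent H z) * norm x))"
    by (intro mult_left_mono order_trans[OF norm_blinfun] mult_left_mono norm_blinfun) auto
  finally show "norm (blinfun_apply (resolvent H w - resolvent H z) x)
      \<le> cmod (w - z) * norm (resolvent H w) * norm (resolvent H z) * norm x"
    by (simp add: mult.assoc)
qed simp

lemma resolvent_tendsto:
  fixes H :: "'a::{complex_normed_vector,complete_space} \<Rightarrow>\<^sub>L 'a"
  assumes H: "clinear_op H" and z: "z \<notin> op_spectrum H"
  shows "((\<lambda>w. resolvent H w) \<longlongrightarrow> resolvent H z) (at z)"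
proof -
  define N where "N = norm (resolvent H z)"
  have N0: "N \<ge> 0" by (simp add: N_def)
  have "((\<lambda>w. cmod (w - z) * N) \<longlongrightarrow> 0) (at z)"
    by (auto intro!: tendsto_eq_intros)
  hence ev: "eventually (\<lambda>w. cmod (w - z) * N < 1/2) (at z)"
    by (rule order_tendstoD) simp
  have "eventually (\<lambda>w. norm (resolvent H w - resolvent H z) \<le> cmod (w - z) * (2 * N * N)) (at z)"
    using ev
  proof eventually_elim
    case (elim w)
    have sm: "cmod (w - z) * norm (resolvent H z) < 1" using elim N_def by simp
    have w: "w \<notin> op_spectrum H" using res_perturb(1)[OF H z sm] .
    have nw: "norm (resolvent H w) \<le> N / (1 - cmod (w - z) * N)"
      using res_perturb(2)[OF H z sm] N_def by simp
    also have "\<dots> \<le> N / (1/2)"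
    proof (rule divide_left_mono[OF _ N0])
      show "1/2 \<le> 1 - cmod (w - z) * N" using elim by simp
      show "0 < (1 - cmod (w - z) * N) * (1/2)" using elim by simp
    qed
    also have "\<dots> = 2 * N" by simp
    finally have nw2: "norm (resolvent H w) \<le> 2 * N" .
    have "norm (resolvent H w - resolvent H z) \<le> cmod (w - z) * norm (resolvent H w) * N"
      using res_diff_norm[OF H z w] N_def by simp
    also have "\<dots> \<le> cmod (w - z) * (2 * N) * N"
      by (intro mult_right_mono mult_left_mono nw2) (auto simp: N0)
    finally show ?case by (simp add: mult.assoc)
  qed
  moreover have "((\<lambda>w. cmod (w - z) * (2 * N * N)) \<longlongrightarrow> 0) (at z)"
    by (auto intro!: tendsto_eq_intros)
  ultimately have "((\<lambda>w. resolvent H w - resolvent H z) \<longlongrightarrow> 0) (at z)"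
    by (rule Lim_null_comparison)
  thus ?thesis by (simp add: LIM_zero_iff)
qed

lemma holo_res1:
  fixes H A :: "'a::{complex_inner,complete_space} \<Rightarrow>\<^sub>L 'a"
  assumes H: "clinear_op H" and A: "clinear_op A" and S: "open S" "S \<inter> op_spectrum H = {}"
  shows "(\<lambda>z. cinner a (blinfun_apply A (blinfun_apply (resolvent H z) b))) holomorphic_on S"
  unfolding holomorphic_on_open[OF S(1)]
proof
  fix z assume zS: "z \<in> S"
  hence z: "z \<notin> op_spectrum H" using S by auto
  define f where "f w = cinner a (blinfun_apply A (blinfun_apply (resolvent H w) b))" for w
  have lim: "((\<lambda>w. cinner a (blinfun_apply A (blinfun_apply (resolvent H w) (blinfun_apply (resolvent H z) b))))
      \<longlongrightarrow> cinner a (blinfun_apply A (blinfun_apply (resolvent H z) (blinfun_apply (resolvent H z) b)))) (at z)"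
    by (intro tendsto_intros resolvent_tendsto[OF H z])
  have ev: "eventually (\<lambda>w. cinner a (blinfun_apply A (blinfun_apply (resolvent H w) (blinfun_apply (resolvent H z) b)))
      = (f w - f z) / (w - z)) (at z)"
    using eventually_at_in_open[OF S(1) zS]
  proof eventually_elim
    case (elim w)
    hence w: "w \<notin> op_spectrum H" and wz: "w \<noteq> z" using S by auto
    have "f w - f z = cinner a (blinfun_apply A (blinfun_apply (resolvent H w) b - blinfun_apply (resolvent H z) b))"
      by (simp add: f_def cinner_diff_right blinfun.diff_right)
    also have "\<dots> = (w - z) * cinner a (blinfun_apply A (blinfun_apply (resolvent H w) (blinfun_apply (resolvent H z) b)))"
      by (simp add: res_identity[OF H z w] clinear_opD[OF A] cinner_scaleC_right)
    finally show ?case using wz by simp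
  qed
  have "(f has_field_derivative cinner a (blinfun_apply A (blinfun_apply (resolvent H z) (blinfun_apply (resolvent H z) b)))) (at z)"
    unfolding has_field_derivative_iff by (rule Lim_transform_eventually[OF lim ev])
  thus "\<exists>f'. ((\<lambda>z. cinner a (blinfun_apply A (blinfun_apply (resolvent H z) b))) has_field_derivative f') (at z)"
    unfolding f_def by blast
qed

lemma holo_res2:
  fixes H B :: "'a::{complex_inner,complete_space} \<Rightarrow>\<^sub>L 'a"
  assumes H: "clinear_op H" and B: "clinear_op B" and S: "open S" "S \<inter> op_spectrum H = {}"
  shows "(\<lambda>z. cinner a (blinfun_apply (resolvent H z) (blinfun_apply B (blinfun_apply (resolvent H z) b)))) holomorphic_on S"
  unfolding holomorphic_on_open[OF S(1)]
proof
  fix z assume zS: "z \<in> S"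
  hence z: "z \<notin> op_spectrum H" using S by auto
  define R where "R w = resolvent H w" for w
  define f where "f w = cinner a (blinfun_apply (R w) (blinfun_apply B (blinfun_apply (R w) b)))" for w
  define g where "g w = cinner a (blinfun_apply (R w) (blinfun_apply (R z) (blinfun_apply B (blinfun_apply (R w) b)))
       + blinfun_apply (R z) (blinfun_apply B (blinfun_apply (R w) (blinfun_apply (R z) b))))" for w
  have lim: "(g \<longlongrightarrow> g z) (at z)"
    unfolding g_def R_def by (intro tendsto_intros resolvent_tendsto[OF H z])
  have ev: "eventually (\<lambda>w. g w = (f w - f z) / (w - z)) (at z)"
    using eventually_at_in_open[OF S(1) zS]
  proof eventually_elim
    case (elim w)
    hence w: "w \<notin> op_spectrum H" and wz: "w \<noteq> z" using S by auto
    have Rz: "clinear_op (R z)" unfolding R_def by (rule clinear_res[OF H z])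
    have d1: "blinfun_apply (R w) y - blinfun_apply (R z) y = (w - z) *\<^sub>C blinfun_apply (R w) (blinfun_apply (R z) y)" for y
      unfolding R_def by (rule res_identity[OF H z w])
    have "blinfun_apply (R w) (blinfun_apply B (blinfun_apply (R w) b)) - blinfun_apply (R z) (blinfun_apply B (blinfun_apply (R z) b))
        = (blinfun_apply (R w) (blinfun_apply B (blinfun_apply (R w) b)) - blinfun_apply (R z) (blinfun_apply B (blinfun_apply (R w) b)))
          + blinfun_apply (R z) (blinfun_apply B (blinfun_apply (R w) b - blinfun_apply (R z) b))"
      by (simp add: blinfun.diff_right)
    also have "\<dots> = (w - z) *\<^sub>C (blinfun_apply (R w) (blinfun_apply (R z) (blinfun_apply B (blinfun_apply (R w) b)))
       + blinfun_apply (R z) (blinfun_apply B (blinfun_apply (R w) (blinfun_apply (R z) b))))"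
      by (simp add: d1 clinear_opD[OF B] clinear_opD[OF Rz] scaleC_add_right)
    finally have "f w - f z = (w - z) * g w"
      by (simp add: f_def g_def cinner_diff_right[symmetric] cinner_scaleC_right)
    thus ?case using wz by simp
  qed
  have "(f has_field_derivative g z) (at z)"
    unfolding has_field_derivative_iff by (rule Lim_transform_eventually[OF lim ev])
  thus "\<exists>f'. ((\<lambda>z. cinner a (blinfun_apply (resolvent H z) (blinfun_apply B (blinfun_apply (resolvent H z) b)))) has_field_derivative f') (at z)"
    unfolding f_def R_def by blast
qed

definition csubspace :: "'a::complex_vector set \<Rightarrow> bool" where
  "csubspace M \<longleftrightarrow> 0 \<in> M \<and> (\<forall>x\<in>M. \<forall>y\<in>M. x + y \<in> M) \<and> (\<forall>c. \<forall>x\<in>M. c *\<^sub>C x \<in> M)"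

lemma csubspace_0: "csubspace M \<Longrightarrow> 0 \<in> M" by (simp add: csubspace_def)
lemma csubspace_add: "csubspace M \<Longrightarrow> x \<in> M \<Longrightarrow> y \<in> M \<Longrightarrow> x + y \<in> M" by (simp add: csubspace_def)
lemma csubspace_scaleC: "csubspace M \<Longrightarrow> x \<in> M \<Longrightarrow> c *\<^sub>C x \<in> M" by (simp add: csubspace_def)
lemma csubspace_scaleR: "csubspace M \<Longrightarrow> x \<in> M \<Longrightarrow> r *\<^sub>R x \<in> M" by (simp add: csubspace_def scaleR_scaleC)
lemma csubspace_minus: "csubspace M \<Longrightarrow> x \<in> M \<Longrightarrow> - x \<in> M"
  using csubspace_scaleR[of M x "-1"] by simp
lemma csubspace_diff: "csubspace M \<Longrightarrow> x \<in> M \<Longrightarrow> y \<in> M \<Longrightarrow> x - y \<in> M"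
  using csubspace_add[of M x "-y"] csubspace_minus[of M y] by simp

lemma parallelogram: "(norm ((a::'a::complex_inner) + b))^2 + (norm (a - b))^2 = 2 * (norm a)^2 + 2 * (norm b)^2"
  by (simp add: norm_add_sq norm_diff_sq)

lemma orth_real_lemma:
  assumes "\<And>t::real. (norm (e::'a::complex_inner))^2 \<le> (norm (e - t *\<^sub>R m))^2"
  shows "Re (cinner e m) = 0"
proof (cases "m = 0")
  case True thus ?thesis by simp
next
  case False
  define r where "r = Re (cinner e m)"
  define n where "n = (norm m)^2"
  have n0: "n > 0" using False by (simp add: n_def)
  have eq: "(norm (e - t *\<^sub>R m))^2 = (norm e)^2 + t^2 * n - 2 * t * r" for t
    by (simp add: norm_diff_sq cinner_scaleR_right n_def r_def power_mult_distrib)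
  have "0 \<le> (r / n)^2 * n - 2 * (r / n) * r" using assms[of "r / n"] eq[of "r / n"] by simp
  also have "\<dots> = - (r^2 / n)" using n0 by (simp add: power2_eq_square field_simps)
  finally have "r^2 / n \<le> 0" by simp
  hence "r^2 \<le> 0" using n0 by (simp add: divide_le_0_iff)
  thus ?thesis by (simp add: r_def)
qed

lemma orth_lemma:
  assumes M: "csubspace M" and e: "\<And>m. m \<in> M \<Longrightarrow> norm (e::'a::complex_inner) \<le> norm (e - m)"
    and m: "m \<in> M"
  shows "cinner m e = 0"
proof -
  have "Re (cinner e m) = 0"
    by (rule orth_real_lemma) (use e csubspace_scaleR[OF M m] in \<open>auto intro: power_mono\<close>)
  moreover have "Re (cinner e (\<i> *\<^sub>C m)) = 0"
    by (rule orth_real_lemma) (use e csubspace_scaleR[OF M csubspace_scaleC[OF M m]] in \<open>auto intro: power_mono\<close>)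
  ultimately have "cinner e m = 0"
    by (simp add: cinner_scaleC_right complex_eq_iff)
  thus ?thesis by (subst cinner_commute) simp
qed

lemma proj_exists:
  fixes M :: "'a::{complex_inner,complete_space} set"
  assumes M: "csubspace M" "closed M"
  shows "\<exists>p\<in>M. \<forall>m\<in>M. cinner m (x - p) = 0"
proof -
  have Mne: "M \<noteq> {}" using csubspace_0[OF M(1)] by blast
  define d where "d = (INF m\<in>M. dist x m)"
  have bdd: "bdd_below ((\<lambda>m. dist x m) ` M)" by (rule bdd_belowI[of _ 0]) auto
  have d_le: "d \<le> dist x m" if "m \<in> M" for m unfolding d_def by (rule cINF_lower[OF bdd that])
  have d0: "d \<ge> 0" unfolding d_def by (rule cINF_greatest[OF Mne]) simp
  have "\<exists>m\<in>M. dist x m < sqrt (d^2 + 1 / (Suc n))" for n :: nat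
  proof -
    have "d < sqrt (d^2 + 1 / (Suc n))" using d0 by (simp add: real_less_rsqrt)
    thus ?thesis unfolding d_def using cINF_less_iff[OF Mne bdd] d_def by simp
  qed
  then obtain s where sM: "\<And>n. s n \<in> M" and sd: "\<And>n. dist x (s n) < sqrt (d^2 + 1 / (Suc n))"
    by metis
  have sd2: "(norm (x - s n))^2 < d^2 + 1 / Suc n" for n
  proof -
    have "norm (x - s n) < sqrt (d^2 + 1 / (Suc n))" using sd[of n] by (simp add: dist_norm)
    hence "(norm (x - s n))^2 < (sqrt (d^2 + 1 / (Suc n)))^2" by (rule power_strict_mono) auto
    thus ?thesis by simp
  qed
  have mid: "(norm (s n - s k))^2 \<le> 2 / Suc n + 2 / Suc k" for n k
  proof -
    have "(1/2) *\<^sub>R (s n + s k) \<in> M" using M(1) sM by (intro csubspace_scaleR csubspace_add) auto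
    hence "d \<le> norm (x - (1/2) *\<^sub>R (s n + s k))" using d_le by (simp add: dist_norm)
    hence "2 * d \<le> norm ((x - s n) + (x - s k))"
    proof -
      assume a: "d \<le> norm (x - (1/2) *\<^sub>R (s n + s k))"
      have "(x - s n) + (x - s k) = 2 *\<^sub>R (x - (1/2) *\<^sub>R (s n + s k))" by (simp add: algebra_simps scaleR_2)
      hence "norm ((x - s n) + (x - s k)) = 2 * norm (x - (1/2) *\<^sub>R (s n + s k))" by simp
      thus ?thesis using a by simp
    qed
    hence "(2 * d)^2 \<le> (norm ((x - s n) + (x - s k)))^2" using d0 by (intro power_mono) auto
    moreover have "(norm ((x - s n) + (x - s k)))^2 + (norm ((x - s n) - (x - s k)))^2
        = 2 * (norm (x - s n))^2 + 2 * (norm (x - s k))^2" by (rule parallelogram)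
    moreover have "(x - s n) - (x - s k) = s k - s n" by simp
    moreover have "norm (s k - s n) = norm (s n - s k)" by (rule norm_minus_commute)
    ultimately show ?thesis using sd2[of n] sd2[of k] by (simp add: power_mult_distrib)
  qed
  have "Cauchy s"
  proof (rule metric_CauchyI)
    fix e :: real assume e: "e > 0"
    obtain N :: nat where N: "4 / e^2 < N" using reals_Archimedean2 by blast
    have e2: "e^2 > 0" using e by simp
    have "4 < real N * e^2" using N e2 by (simp add: field_simps)
    moreover have "real (Suc N) * e^2 = real N * e^2 + e^2" by (simp add: algebra_simps)
    ultimately have "4 < real (Suc N) * e^2" using e2 by linarith
    hence "4 / Suc N < e^2" by (simp add: field_simps)
    show "\<exists>M. \<forall>m\<ge>M. \<forall>n\<ge>M. dist (s m) (s n) < e"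
    proof (intro exI allI impI)
      fix m n assume mn: "N \<le> m" "N \<le> n"
      have "(dist (s m) (s n))^2 \<le> 2 / Suc m + 2 / Suc n" using mid by (simp add: dist_norm)
      also have "\<dots> \<le> 2 / Suc N + 2 / Suc N" using mn by (intro add_mono divide_left_mono) auto
      also have "\<dots> < e^2" using \<open>4 / Suc N < e^2\<close> by simp
      finally show "dist (s m) (s n) < e" using e by (meson power_less_imp_less_base less_imp_le)
    qed
  qed
  then obtain p where sp: "s \<longlonglongrightarrow> p" using Cauchy_convergent_iff convergent_def by blast
  have pM: "p \<in> M" using closed_sequentially[OF M(2) sM sp] .
  have lim1: "(\<lambda>n. 1 / real (Suc n)) \<longlonglongrightarrow> 0"
    using LIMSEQ_inverse_real_of_nat by (simp add: inverse_eq_divide)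
  have xp: "norm (x - p) \<le> d"
  proof (rule tendsto_le[OF trivial_limit_sequentially])
    show "((\<lambda>n. sqrt (d^2 + 1 / Suc n) + norm (s n - p)) \<longlongrightarrow> d) sequentially"
    proof -
      have "((\<lambda>n. sqrt (d^2 + 1 / Suc n) + norm (s n - p)) \<longlongrightarrow> sqrt (d^2 + 0) + norm (p - p)) sequentially"
        by (intro tendsto_intros sp lim1)
      thus ?thesis using d0 by simp
    qed
    show "((\<lambda>n. norm (x - p)) \<longlongrightarrow> norm (x - p)) sequentially" by simp
    show "\<forall>\<^sub>F n in sequentially. norm (x - p) \<le> sqrt (d^2 + 1 / Suc n) + norm (s n - p)"
    proof (rule always_eventually, rule allI)
      fix n
      have "norm (x - p) \<le> norm (x - s n) + norm (s n - p)" using norm_triangle_ineq[of "x - s n" "s n - p"] by simp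
      also have "norm (x - s n) \<le> sqrt (d^2 + 1 / Suc n)" using sd[of n] by (simp add: dist_norm)
      finally show "norm (x - p) \<le> sqrt (d^2 + 1 / Suc n) + norm (s n - p)" by simp
    qed
  qed
  have "cinner m (x - p) = 0" if m: "m \<in> M" for m
  proof (rule orth_lemma[OF M(1) _ m])
    fix m' assume m': "m' \<in> M"
    have "p + m' \<in> M" using csubspace_add[OF M(1) pM m'] .
    hence "d \<le> norm (x - (p + m'))" using d_le by (simp add: dist_norm)
    thus "norm (x - p) \<le> norm (x - p - m')" using xp by (simp add: algebra_simps)
  qed
  thus ?thesis using pM by blast
qed

definition proj :: "'a::complex_inner set \<Rightarrow> 'a \<Rightarrow> 'a" where
  "proj M x = (SOME p. p \<in> M \<and> (\<forall>m\<in>M. cinner m (x - p) = 0))"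

context
  fixes M :: "'a::{complex_inner,complete_space} set"
  assumes M: "csubspace M" "closed M"
begin

lemma proj_props: "proj M x \<in> M" "\<And>m. m \<in> M \<Longrightarrow> cinner m (x - proj M x) = 0"
proof -
  have "\<exists>p. p \<in> M \<and> (\<forall>m\<in>M. cinner m (x - p) = 0)" using proj_exists[OF M] by blast
  hence "proj M x \<in> M \<and> (\<forall>m\<in>M. cinner m (x - proj M x) = 0)" unfolding proj_def by (rule someI_ex)
  thus "proj M x \<in> M" "\<And>m. m \<in> M \<Longrightarrow> cinner m (x - proj M x) = 0" by auto
qed

lemma proj_unique:
  assumes p: "p \<in> M" and o: "\<And>m. m \<in> M \<Longrightarrow> cinner m (x - p) = 0"
  shows "proj M x = p"
proof -
  define q where "q = proj M x"
  have qM: "q \<in> M" and oq: "\<And>m. m \<in> M \<Longrightarrow> cinner m (x - q) = 0" using proj_props unfolding q_def by auto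
  have d: "p - q \<in> M" using csubspace_diff[OF M(1) p qM] .
  have "cinner (p - q) (p - q) = cinner (p - q) (x - q) - cinner (p - q) (x - p)"
    by (simp add: cinner_diff_right)
  also have "\<dots> = 0" using oq[OF d] o[OF d] by simp
  finally show ?thesis unfolding q_def[symmetric] by (simp add: cinner_self_eq_0)
qed

lemma proj_add: "proj M (x + y) = proj M x + proj M y"
proof (rule proj_unique)
  show "proj M x + proj M y \<in> M" by (intro csubspace_add[OF M(1)] proj_props(1))
  fix m assume m: "m \<in> M"
  have "x + y - (proj M x + proj M y) = (x - proj M x) + (y - proj M y)" by simp
  hence "cinner m (x + y - (proj M x + proj M y)) = cinner m (x - proj M x) + cinner m (y - proj M y)"
    by (simp only: cinner_add_right)
  thus "cinner m (x + y - (proj M x + proj M y)) = 0"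
    by (simp add: proj_props(2)[OF m])
qed

lemma proj_scaleC: "proj M (c *\<^sub>C x) = c *\<^sub>C proj M x"
proof (rule proj_unique)
  show "c *\<^sub>C proj M x \<in> M" by (intro csubspace_scaleC[OF M(1)] proj_props(1))
  fix m assume m: "m \<in> M"
  have "c *\<^sub>C x - c *\<^sub>C proj M x = c *\<^sub>C (x - proj M x)" by (simp add: scaleC_diff_right)
  thus "cinner m (c *\<^sub>C x - c *\<^sub>C proj M x) = 0"
    using proj_props(2)[OF m] by (simp add: cinner_scaleC_right)
qed

lemma proj_pythag: "(norm x)^2 = (norm (proj M x))^2 + (norm (x - proj M x))^2"
proof -
  have "x = proj M x + (x - proj M x)" by simp
  hence "(norm x)^2 = (norm (proj M x + (x - proj M x)))^2" by simp
  also have "\<dots> = (norm (proj M x))^2 + (norm (x - proj M x))^2"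
    by (rule norm_pythag) (rule proj_props(2)[OF proj_props(1)])
  finally show ?thesis .
qed

lemma proj_norm: "norm (proj M x) \<le> norm x"
proof -
  have "(norm (proj M x))^2 \<le> (norm x)^2" using proj_pythag[of x] by simp
  thus ?thesis by (simp add: power2_le_iff_abs_le)
qed

lemma bounded_linear_proj: "bounded_linear (proj M)"
proof (rule bounded_linear_intro[where K=1])
  show "proj M (x + y) = proj M x + proj M y" for x y by (rule proj_add)
  show "proj M (r *\<^sub>R x) = r *\<^sub>R proj M x" for r x by (simp add: scaleR_scaleC proj_scaleC)
  show "norm (proj M x) \<le> norm x * 1" for x using proj_norm by simp
qed

lemma proj_fix: "m \<in> M \<Longrightarrow> proj M m = m"
  by (rule proj_unique) auto

lemma proj_zero: "(\<And>m. m \<in> M \<Longrightarrow> cinner m x = 0) \<Longrightarrow> proj M x = 0"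
  by (rule proj_unique) (auto intro: csubspace_0[OF M(1)])

lemma proj_selfadj: "cinner (proj M x) y = cinner x (proj M y)"
proof -
  have a: "cinner (proj M x) (y - proj M y) = 0" by (rule proj_props(2)[OF proj_props(1)])
  have b: "cinner (proj M y) (x - proj M x) = 0" by (rule proj_props(2)[OF proj_props(1)])
  have b': "cinner (x - proj M x) (proj M y) = 0" using b by (subst cinner_commute) simp
  have "cinner (proj M x) y = cinner (proj M x) (proj M y)" using a by (simp add: cinner_diff_right)
  also have "\<dots> = cinner x (proj M y)" using b' by (simp add: cinner_diff_left)
  finally show ?thesis .
qed

definition projL :: "'a \<Rightarrow>\<^sub>L 'a" where "projL = Blinfun (proj M)"

lemma projL_apply[simp]: "blinfun_apply projL x = proj M x"
  unfolding projL_def by (simp add: bounded_linear_Blinfun_apply[OF bounded_linear_proj])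

lemma clinear_projL: "clinear_op projL"
  by (simp add: clinear_op_def proj_scaleC)

end

lemma csubspace_kernel: "clinear_op K \<Longrightarrow> csubspace {x. blinfun_apply K x = 0}"
  by (auto simp: csubspace_def blinfun.add_right clinear_opD)

lemma closed_kernel: "closed {x. blinfun_apply K x = 0}"
  by (intro closed_Collect_eq continuous_intros) 

lemma csubspace_closure:
  fixes S :: "'a::complex_normed_vector set"
  assumes S: "csubspace S" shows "csubspace (closure S)"
  unfolding csubspace_def
proof (intro conjI ballI allI)
  show "0 \<in> closure S" using csubspace_0[OF S] closure_subset by blast
next
  fix x y assume "x \<in> closure S" "y \<in> closure S"
  then obtain f g where f: "\<And>n. f n \<in> S" "f \<longlonglongrightarrow> x" and g: "\<And>n. g n \<in> S" "g \<longlonglongrightarrow> y"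
    unfolding closure_sequential by blast
  have "(\<lambda>n. f n + g n) \<longlonglongrightarrow> x + y" by (intro tendsto_intros f g)
  moreover have "\<forall>n. f n + g n \<in> S" using csubspace_add[OF S] f g by blast
  ultimately show "x + y \<in> closure S" unfolding closure_sequential
    by (intro exI[of _ "\<lambda>n. f n + g n"]) simp
next
  fix c x assume "x \<in> closure S"
  then obtain f where f: "\<And>n. f n \<in> S" "f \<longlonglongrightarrow> x" unfolding closure_sequential by blast
  have "(\<lambda>n. c *\<^sub>C f n) \<longlonglongrightarrow> c *\<^sub>C x"
    by (rule bounded_linear.tendsto[OF bounded_linear_scaleC f(2)])
  moreover have "\<forall>n. c *\<^sub>C f n \<in> S" using csubspace_scaleC[OF S] f by blast
  ultimately show "c *\<^sub>C x \<in> closure S" unfolding closure_sequential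
    by (intro exI[of _ "\<lambda>n. c *\<^sub>C f n"]) simp
qed

lemma sa_clinear: "self_adjoint_op H \<Longrightarrow> clinear_op H" by (simp add: self_adjoint_op_def)
lemma sa_sym: "self_adjoint_op H \<Longrightarrow> cinner (blinfun_apply H x) y = cinner x (blinfun_apply H y)"
  by (simp add: self_adjoint_op_def)

lemma sa_shift_real: "self_adjoint_op H \<Longrightarrow> self_adjoint_op (H - cscaleL (complex_of_real \<mu>) id_blinfun)"
  unfolding self_adjoint_op_def
  by (auto simp: clinear_shift shift_apply cinner_diff_left cinner_diff_right cinner_scaleC_left cinner_scaleC_right)

lemma sa_eigen_real:
  assumes H: "self_adjoint_op H" and e: "blinfun_apply H x = \<mu> *\<^sub>C x" and x: "x \<noteq> 0"
  shows "\<mu> = complex_of_real (Re \<mu>)"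
proof -
  have "cinner x (blinfun_apply H x) = cinner (blinfun_apply H x) x" using sa_sym[OF H] by simp
  hence "\<mu> * cinner x x = cnj \<mu> * cinner x x" using e by (simp add: cinner_scaleC_right cinner_scaleC_left)
  hence "\<mu> = cnj \<mu>" using x by (simp add: cinner_self_eq_0)
  hence "Im \<mu> = Im (cnj \<mu>)" by simp
  hence "Im \<mu> = 0" by simp
  thus ?thesis by (simp add: complex_eq_iff)
qed

lemma not_invertible_if_approx:
  assumes "\<And>e. e > 0 \<Longrightarrow> \<exists>u. norm u = 1 \<and> norm (blinfun_apply A u) < e"
  shows "\<not> invertible_op A"
proof
  assume inv: "invertible_op A"
  define K where "K = norm (inverse_op A)"
  obtain u where u: "norm u = 1" "norm (blinfun_apply A u) < 1 / (K + 1)"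
    using assms[of "1 / (K + 1)"] by (auto simp: K_def add_nonneg_pos)
  have "norm u \<le> K * norm (blinfun_apply A u)" unfolding K_def by (rule invertible_bounded_below[OF inv])
  also have "\<dots> \<le> K * (1 / (K + 1))" using u(2) by (intro mult_left_mono) (auto simp: K_def)
  also have "\<dots> < 1"
  proof -
    have K0: "K \<ge> 0" by (simp add: K_def)
    thus ?thesis by (simp add: divide_less_eq)
  qed
  finally show False using u(1) by simp
qed

lemma resolvent_invertible:
  "z \<notin> op_spectrum H \<Longrightarrow> invertible_op (resolvent H z)"
  by (rule invertible_opI(1)[of _ "H - cscaleL z id_blinfun"]) (simp_all add: shift_apply res_left res_right)

lemma cscaleL_id_invertible:
  "c \<noteq> 0 \<Longrightarrow> invertible_op (cscaleL c (id_blinfun::'a::complex_normed_vector \<Rightarrow>\<^sub>L 'a))"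
  by (rule invertible_opI(1)[of _ "cscaleL (1 / c) id_blinfun"]) (simp_all add: scaleC_scaleC scaleC_one)

lemma sa_resolvent_norm:
  fixes T :: "'a::{complex_inner,complete_space} \<Rightarrow>\<^sub>L 'a"
  assumes T: "self_adjoint_op T" and mu: "complex_of_real \<mu> \<notin> op_spectrum T"
    and d: "d > 0" and dist: "\<And>s. s \<in> op_spectrum T \<Longrightarrow> d \<le> cmod (s - complex_of_real \<mu>)"
  shows "norm (resolvent T (complex_of_real \<mu>)) \<le> 1 / d"
proof (rule ccontr)
  define B where "B = resolvent T (complex_of_real \<mu>)"
  define \<beta> where "\<beta> = norm B"
  assume "\<not> norm (resolvent T (complex_of_real \<mu>)) \<le> 1 / d"
  hence bd: "\<beta> > 1/d" by (simp add: \<beta>_def B_def)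
  have b0: "\<beta> > 0" using bd d by (meson less_trans zero_less_divide_1_iff)
  have Tc: "clinear_op T" using T by (rule sa_clinear)
  have Bc: "clinear_op B" unfolding B_def using clinear_res[OF Tc mu] .
  let ?S = "T - cscaleL (complex_of_real \<mu>) id_blinfun"
  have Ssa: "self_adjoint_op ?S" using sa_shift_real[OF T] .
  have BS: "blinfun_apply ?S (blinfun_apply B y) = y" for y
    using res_left[OF mu, of y] by (simp add: B_def shift_apply)
  have SB: "blinfun_apply B (blinfun_apply ?S y) = y" for y
    using res_right[OF mu, of y] by (simp add: B_def shift_apply)
  have Bsa: "cinner (blinfun_apply B x) y = cinner x (blinfun_apply B y)" for x y
  proof -
    have "cinner (blinfun_apply B x) y = cinner (blinfun_apply B x) (blinfun_apply ?S (blinfun_apply B y))"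
      by (simp only: BS)
    also have "\<dots> = cinner (blinfun_apply ?S (blinfun_apply B x)) (blinfun_apply B y)"
      using sa_sym[OF Ssa] by simp
    also have "\<dots> = cinner x (blinfun_apply B y)" by (simp only: BS)
    finally show ?thesis .
  qed
  have approx: "\<exists>u. norm u = 1 \<and> c < norm (blinfun_apply B u)" if c: "0 \<le> c" "c < \<beta>" for c
  proof (rule ccontr)
    assume "\<nexists>u. norm u = 1 \<and> c < norm (blinfun_apply B u)"
    hence h: "norm (blinfun_apply B u) \<le> c" if "norm u = 1" for u
    proof (rule contrapos_np)
      assume "\<not> norm (blinfun_apply B u) \<le> c"
      hence "c < norm (blinfun_apply B u)" by simp
      thus "\<exists>u. norm u = 1 \<and> c < norm (blinfun_apply B u)" using that by blast
    qed
    have "norm (blinfun_apply B x) \<le> c * norm x" for x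
    proof (cases "x = 0")
      case False
      define u where "u = (1 / norm x) *\<^sub>R x"
      have "norm u = 1" using False by (simp add: u_def)
      hence "norm (blinfun_apply B u) \<le> c" by (rule h)
      moreover have "blinfun_apply B u = (1 / norm x) *\<^sub>R blinfun_apply B x"
        by (simp add: u_def blinfun.scaleR_right)
      ultimately have "norm (blinfun_apply B x) / norm x \<le> c" by simp
      thus ?thesis using False by (simp add: divide_le_eq mult.commute)
    qed simp
    hence "\<beta> \<le> c" unfolding \<beta>_def by (rule norm_blinfun_bound[OF c(1)])
    thus False using c by simp
  qed
  define Bp where "Bp = B - cscaleL (complex_of_real \<beta>) id_blinfun"
  define Bm where "Bm = B - cscaleL (complex_of_real (- \<beta>)) id_blinfun"
  have C2_apply: "blinfun_apply (Bp o\<^sub>L Bm) x = blinfun_apply B (blinfun_apply B x) - (\<beta>^2) *\<^sub>R x" for x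
  proof -
    have "blinfun_apply (Bp o\<^sub>L Bm) x = blinfun_apply B (blinfun_apply B x + \<beta> *\<^sub>R x) - \<beta> *\<^sub>R (blinfun_apply B x + \<beta> *\<^sub>R x)"
      by (simp add: Bp_def Bm_def shift_apply scaleC_of_real scaleC_minus_left)
    also have "\<dots> = blinfun_apply B (blinfun_apply B x) - (\<beta>^2) *\<^sub>R x"
      by (simp add: blinfun.add_right blinfun.scaleR_right algebra_simps power2_eq_square)
    finally show ?thesis .
  qed
  have notinv: "\<not> invertible_op (Bp o\<^sub>L Bm)"
  proof (rule not_invertible_if_approx)
    fix e :: real assume e: "e > 0"
    define c where "c = sqrt (max 0 (\<beta>^2 - e^2 / (4 * \<beta>^2)))"
    have c0: "0 \<le> c" by (simp add: c_def)
    have "max 0 (\<beta>^2 - e^2 / (4 * \<beta>^2)) < \<beta>^2" using b0 e by (simp add: max_def)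
    hence "c < sqrt (\<beta>^2)" unfolding c_def by (rule real_sqrt_less_mono)
    hence cb: "c < \<beta>" using b0 by simp
    have c2: "c^2 \<ge> \<beta>^2 - e^2 / (4 * \<beta>^2)" unfolding c_def by simp
    obtain u where u: "norm u = 1" "c < norm (blinfun_apply B u)" using approx[OF c0 cb] by blast
    define v where "v = blinfun_apply B u"
    have nv: "norm v \<le> \<beta>" using norm_blinfun[of B u] u(1) by (simp add: v_def \<beta>_def)
    have "norm (blinfun_apply B v) \<le> \<beta> * norm v" using norm_blinfun[of B v] by (simp add: \<beta>_def)
    also have "\<dots> \<le> \<beta> * \<beta>" using nv b0 by (intro mult_left_mono) auto
    finally have nBv: "norm (blinfun_apply B v) \<le> \<beta> * \<beta>" .
    have cv: "c^2 < (norm v)^2" using u(2) c0 by (simp add: v_def power_strict_mono)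
    have "cinner (blinfun_apply B v) u = cinner v v" unfolding v_def by (rule Bsa)
    hence inner: "Re (cinner (blinfun_apply B v) u) = (norm v)^2" by (simp add: Re_cinner_self)
    have "(norm (blinfun_apply (Bp o\<^sub>L Bm) u))^2 = (norm (blinfun_apply B v - (\<beta>^2) *\<^sub>R u))^2"
      by (simp only: C2_apply v_def)
    also have "\<dots> = (norm (blinfun_apply B v))^2 + \<beta>^4 - 2 * \<beta>^2 * (norm v)^2"
      using u(1) inner by (simp add: norm_diff_sq cinner_scaleR_right power_mult_distrib
          flip: power_mult_distrib)
    also have "\<dots> \<le> (\<beta> * \<beta>)^2 + \<beta>^4 - 2 * \<beta>^2 * (norm v)^2"
      using nBv by (simp add: power_mono)
    also have "\<dots> < (\<beta> * \<beta>)^2 + \<beta>^4 - 2 * \<beta>^2 * c^2"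
      using cv b0 by simp
    also have "\<dots> \<le> 2 * \<beta>^2 * (e^2 / (4 * \<beta>^2))"
    proof -
      have m: "2 * \<beta>^2 * (\<beta>^2 - e^2 / (4 * \<beta>^2)) \<le> 2 * \<beta>^2 * c^2"
        using c2 by (intro mult_left_mono) auto
      have i: "(\<beta> * \<beta>)^2 + \<beta>^4 - 2 * \<beta>^2 * (\<beta>^2 - e^2 / (4 * \<beta>^2)) = 2 * \<beta>^2 * (e^2 / (4 * \<beta>^2))"
        by (simp add: algebra_simps power2_eq_square power4_eq_xxxx)
      show ?thesis using m i by linarith
    qed
    also have "\<dots> = e^2 / 2" using b0 by (simp add: field_simps)
    also have "\<dots> < e^2" using e by simp
    finally have "norm (blinfun_apply (Bp o\<^sub>L Bm) u) < e" using e by (simp add: power_less_imp_less_base)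
    thus "\<exists>u. norm u = 1 \<and> norm (blinfun_apply (Bp o\<^sub>L Bm) u) < e" using u(1) by blast
  qed
  have "\<exists>s. (s = \<beta> \<or> s = - \<beta>) \<and> \<not> invertible_op (B - cscaleL (complex_of_real s) id_blinfun)"
    using notinv invertible_compose(1)[of Bp Bm] unfolding Bp_def Bm_def by blast
  then obtain s where s: "s = \<beta> \<or> s = - \<beta>" and sinv: "\<not> invertible_op (B - cscaleL (complex_of_real s) id_blinfun)"
    by blast
  have s0: "s \<noteq> 0" using s b0 by auto
  have spec: "complex_of_real (\<mu> + 1 / s) \<in> op_spectrum T"
  proof (rule ccontr)
    assume "complex_of_real (\<mu> + 1 / s) \<notin> op_spectrum T"
    hence Kinv: "invertible_op (T - cscaleL (complex_of_real (\<mu> + 1 / s)) id_blinfun)" by (simp add: op_spectrum_def)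
    define K where "K = T - cscaleL (complex_of_real (\<mu> + 1 / s)) id_blinfun"
    have Kc: "clinear_op K" unfolding K_def using Tc by (rule clinear_shift)
    have BKc: "clinear_op (B o\<^sub>L K)" using Bc Kc by (rule clinear_compose)
    have eq: "B - cscaleL (complex_of_real s) id_blinfun = (B o\<^sub>L K) o\<^sub>L cscaleL (complex_of_real (- s)) id_blinfun"
    proof (rule blinfun_eqI)
      fix x
      have "blinfun_apply K x = blinfun_apply T x - (\<mu> + 1 / s) *\<^sub>R x"
        by (simp only: K_def shift_apply scaleC_of_real)
      also have "\<dots> = (blinfun_apply T x - \<mu> *\<^sub>R x) - (1 / s) *\<^sub>R x"
        by (simp add: algebra_simps)
      also have "blinfun_apply T x - \<mu> *\<^sub>R x = blinfun_apply ?S x"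
        by (simp only: shift_apply scaleC_of_real)
      finally have Kx: "blinfun_apply K x = blinfun_apply ?S x - (1 / s) *\<^sub>R x" .
      have "blinfun_apply ((B o\<^sub>L K) o\<^sub>L cscaleL (complex_of_real (- s)) id_blinfun) x
          = (- s) *\<^sub>R blinfun_apply B (blinfun_apply K x)"
        using clinear_opD[OF BKc, of "complex_of_real (- s)" x] by (simp add: scaleC_of_real scaleC_minus_left)
      also have "\<dots> = (- s) *\<^sub>R (x - (1 / s) *\<^sub>R blinfun_apply B x)"
        by (simp add: Kx blinfun.diff_right blinfun.scaleR_right SB)
      also have "\<dots> = blinfun_apply B x - s *\<^sub>R x" using s0 by (simp add: algebra_simps)
      finally show "blinfun_apply (B - cscaleL (complex_of_real s) id_blinfun) x
          = blinfun_apply ((B o\<^sub>L K) o\<^sub>L cscaleL (complex_of_real (- s)) id_blinfun) x"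
        by (simp add: shift_apply scaleC_of_real)
    qed
    have "invertible_op ((B o\<^sub>L K) o\<^sub>L cscaleL (complex_of_real (- s)) id_blinfun)"
      using resolvent_invertible[OF mu] Kinv cscaleL_id_invertible[of "complex_of_real (- s)"] s0
      unfolding B_def K_def by (intro invertible_compose(1)) auto
    thus False using sinv eq by simp
  qed
  have "d \<le> cmod (complex_of_real (\<mu> + 1 / s) - complex_of_real \<mu>)" by (rule dist[OF spec])
  also have "\<dots> = 1 / \<beta>" using s b0 by (auto simp: norm_divide)
  finally have "\<beta> \<le> 1 / d" using d b0 by (simp add: field_simps)
  thus False using bd by simp
qed

lemma sa_bounded_below:
  fixes T :: "'a::{complex_inner,complete_space} \<Rightarrow>\<^sub>L 'a"
  assumes T: "self_adjoint_op T" and mu: "complex_of_real \<mu> \<notin> op_spectrum T"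
    and d: "d > 0" and dist: "\<And>s. s \<in> op_spectrum T \<Longrightarrow> d \<le> cmod (s - complex_of_real \<mu>)"
  shows "d * norm y \<le> norm (blinfun_apply T y - complex_of_real \<mu> *\<^sub>C y)"
proof -
  have "norm y = norm (blinfun_apply (resolvent T (complex_of_real \<mu>)) (blinfun_apply T y - complex_of_real \<mu> *\<^sub>C y))"
    by (simp add: res_right[OF mu])
  also have "\<dots> \<le> (1 / d) * norm (blinfun_apply T y - complex_of_real \<mu> *\<^sub>C y)"
    by (rule order_trans[OF norm_blinfun mult_right_mono[OF sa_resolvent_norm[OF T mu d dist]]]) auto
  finally show ?thesis using d by (simp add: field_simps)
qed

lemma sa_complex_shift_norm:
  fixes T :: "'a::{complex_inner,complete_space} \<Rightarrow>\<^sub>L 'a"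
  assumes T: "self_adjoint_op T"
  shows "(norm (blinfun_apply T y - z *\<^sub>C y))^2
       = (norm (blinfun_apply T y - complex_of_real (Re z) *\<^sub>C y))^2 + (Im z)^2 * (norm y)^2"
proof -
  define a where "a = Re z"
  define b where "b = Im z"
  define w where "w = blinfun_apply T y - complex_of_real a *\<^sub>C y"
  define c where "c = \<i> * complex_of_real b"
  have z: "z = complex_of_real a + c" by (simp add: a_def b_def c_def complex_eq_iff)
  have split: "blinfun_apply T y - z *\<^sub>C y = w - c *\<^sub>C y"
    by (simp add: z w_def scaleC_add_left)
  have Ssa: "self_adjoint_op (T - cscaleL (complex_of_real a) id_blinfun)" by (rule sa_shift_real[OF T])
  have "cinner w y = cinner y w"
    using sa_sym[OF Ssa, of y y] by (simp add: w_def shift_apply)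
  also have "cinner y w = cnj (cinner w y)" by (rule cinner_commute)
  finally have "Im (cinner w y) = Im (cnj (cinner w y))" by simp
  hence wr: "Im (cinner w y) = 0" by simp
  have "(norm (w - c *\<^sub>C y))^2 = (norm w)^2 + (norm (c *\<^sub>C y))^2 - 2 * Re (cinner w (c *\<^sub>C y))"
    by (rule norm_diff_sq)
  also have "Re (cinner w (c *\<^sub>C y)) = 0" using wr by (simp add: cinner_scaleC_right c_def)
  also have "(norm (c *\<^sub>C y))^2 = b^2 * (norm y)^2"
    by (simp add: norm_scaleC c_def norm_mult power_mult_distrib)
  finally show ?thesis by (simp add: split w_def a_def b_def)
qed

lemma dense_test:
  fixes S :: "'a::{complex_inner,complete_space} \<Rightarrow>\<^sub>L 'a"
  assumes Ssa: "self_adjoint_op S" and ker: "\<And>x. blinfun_apply S x = 0 \<Longrightarrow> x = 0" and d: "\<delta> > 0"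
  shows "\<exists>y. norm (u - blinfun_apply S y) < \<delta>"
proof -
  have Sc: "clinear_op S" using Ssa by (rule sa_clinear)
    define M where "M = closure (range (blinfun_apply S))"
    have sub: "csubspace (range (blinfun_apply S))"
      unfolding csubspace_def
    proof (intro conjI ballI allI)
      show "0 \<in> range (blinfun_apply S)" by (rule range_eqI[of _ _ 0]) simp
    next
      fix x y assume "x \<in> range (blinfun_apply S)" "y \<in> range (blinfun_apply S)"
      then obtain x' y' where "x = blinfun_apply S x'" "y = blinfun_apply S y'" by blast
      thus "x + y \<in> range (blinfun_apply S)" by (simp add: blinfun.add_right[symmetric])
    next
      fix c x assume "x \<in> range (blinfun_apply S)"
      then obtain x' where "x = blinfun_apply S x'" by blast
      thus "c *\<^sub>C x \<in> range (blinfun_apply S)" by (simp add: clinear_opD[OF Sc, symmetric])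
    qed
    have Msub: "csubspace M" unfolding M_def by (rule csubspace_closure[OF sub])
    have Mcl: "closed M" unfolding M_def by simp
    define w where "w = u - proj M u"
    have o: "cinner (blinfun_apply S y) w = 0" for y
    proof -
      have "blinfun_apply S y \<in> M" unfolding M_def by (rule subsetD[OF closure_subset]) simp
      thus ?thesis unfolding w_def by (rule proj_props(2)[OF Msub Mcl])
    qed
    have h: "cinner y (blinfun_apply S w) = 0" for y
    proof -
      have "cinner y (blinfun_apply S w) = cinner (blinfun_apply S y) w" by (rule sa_sym[OF Ssa, symmetric])
      also have "\<dots> = 0" by (rule o)
      finally show ?thesis .
    qed
    have "blinfun_apply S w = 0" by (rule cinner_eq_zero_all) (simp add: h)
    hence "w = 0" by (rule ker)
    hence "u - proj M u = 0" by (simp only: w_def)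
    hence "u = proj M u" by (rule right_minus_eq[THEN iffD1])
    hence e: "proj M u = u" by (rule sym)
    have "u \<in> M" using proj_props(1)[OF Msub Mcl, of u] unfolding e .
    hence "\<forall>e>0. \<exists>v\<in>range (blinfun_apply S). dist v u < e" unfolding M_def closure_approachable .
    then obtain v where "v \<in> range (blinfun_apply S)" "dist v u < \<delta>" using d by blast
    then obtain y where "v = blinfun_apply S y" "dist v u < \<delta>" by blast
    hence "norm (u - blinfun_apply S y) < \<delta>" by (simp add: dist_norm norm_minus_commute)
    thus ?thesis by blast
qed

lemma isolated_point_not_spectrum:
  fixes T :: "'a::{complex_inner,complete_space} \<Rightarrow>\<^sub>L 'a"
  assumes T: "self_adjoint_op T"
    and ker: "\<And>x. blinfun_apply T x = complex_of_real lm *\<^sub>C x \<Longrightarrow> x = 0"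
    and eps: "\<epsilon> > 0"
    and iso: "\<And>s. s \<in> op_spectrum T \<Longrightarrow> s = complex_of_real lm \<or> \<epsilon> \<le> cmod (s - complex_of_real lm)"
  shows "complex_of_real lm \<notin> op_spectrum T"
proof -
  define l where "l = complex_of_real lm"
  define r where "r = \<epsilon> / 2"
  have r0: "r > 0" and rl: "r < \<epsilon>" using eps by (auto simp: r_def)
  have Tc: "clinear_op T" using T by (rule sa_clinear)
  have notspec: "z \<notin> op_spectrum T" if "z \<noteq> l" "cmod (z - l) < \<epsilon>" for z
    using iso[of z] that by (auto simp: l_def)
  have bb: "cmod (z - l) * norm y \<le> norm (blinfun_apply T y - z *\<^sub>C y)"
    if z: "z \<noteq> l" "cmod (z - l) \<le> r" for z y
  proof -
    define a where "a = Re z"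
    have Rez: "Re (z - l) = a - lm" by (simp add: a_def l_def)
    have Imz: "Im (z - l) = Im z" by (simp add: l_def)
    have ha: "\<bar>a - lm\<bar> \<le> cmod (z - l)" using abs_Re_le_cmod[of "z - l"] Rez by simp
    have A: "(\<bar>a - lm\<bar> * norm y)^2 \<le> (norm (blinfun_apply T y - complex_of_real a *\<^sub>C y))^2"
    proof (cases "a = lm")
      case True thus ?thesis by simp
    next
      case False
      have d0: "\<bar>a - lm\<bar> > 0" using False by simp
      have cm: "cmod (complex_of_real a - l) = \<bar>a - lm\<bar>"
        by (simp add: l_def flip: of_real_diff)
      have a_ns: "complex_of_real a \<notin> op_spectrum T"
        by (rule notspec) (use False cm ha z rl in \<open>auto simp: l_def\<close>)
      have "\<bar>a - lm\<bar> * norm y \<le> norm (blinfun_apply T y - complex_of_real a *\<^sub>C y)"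
      proof (rule sa_bounded_below[OF T a_ns d0])
        fix s assume s: "s \<in> op_spectrum T"
        show "\<bar>a - lm\<bar> \<le> cmod (s - complex_of_real a)"
        proof (cases "s = l")
          case True thus ?thesis using cm by (simp add: norm_minus_commute)
        next
          case False
          hence "\<epsilon> \<le> cmod (s - l)" using iso[OF s] by (auto simp: l_def)
          moreover have "cmod (s - l) \<le> cmod (s - complex_of_real a) + cmod (complex_of_real a - l)"
            using norm_triangle_ineq[of "s - complex_of_real a" "complex_of_real a - l"] by simp
          ultimately show ?thesis using cm ha z(2) by (simp add: r_def)
        qed
      qed
      thus ?thesis by (rule power_mono) simp
    qed
    have c2: "(cmod (z - l))^2 = (a - lm)^2 + (Im z)^2" by (simp only: cmod_power2 Rez Imz)
    have "(cmod (z - l) * norm y)^2 = ((a - lm)^2 + (Im z)^2) * (norm y)^2"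
      by (simp only: power_mult_distrib c2)
    also have "\<dots> = (\<bar>a - lm\<bar> * norm y)^2 + (Im z)^2 * (norm y)^2"
      by (simp add: power_mult_distrib algebra_simps)
    also have "\<dots> \<le> (norm (blinfun_apply T y - complex_of_real a *\<^sub>C y))^2 + (Im z)^2 * (norm y)^2"
      using A by simp
    also have "\<dots> = (norm (blinfun_apply T y - z *\<^sub>C y))^2"
      using sa_complex_shift_norm[OF T, of y z] by (simp add: a_def)
    finally show ?thesis by (rule power2_le_imp_le) simp
  qed
  have resb: "cmod (z - l) * norm (blinfun_apply (resolvent T z) x) \<le> norm x"
    if z: "z \<noteq> l" "cmod (z - l) \<le> r" for z x
  proof -
    have zs: "z \<notin> op_spectrum T" using notspec z rl by auto
    show ?thesis using bb[OF z, of "blinfun_apply (resolvent T z) x"] res_left[OF zs, of x] by simp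
  qed
  define S where "S = T - cscaleL l id_blinfun"
  have Ssa: "self_adjoint_op S" unfolding S_def l_def by (rule sa_shift_real[OF T])
  have Sc: "clinear_op S" using Ssa by (rule sa_clinear)
  have dense: "\<exists>y. norm (u - blinfun_apply S y) < \<delta>" if "\<delta> > 0" for u \<delta>
  proof (rule dense_test[OF Ssa _ that])
    fix x assume "blinfun_apply S x = 0"
    hence "blinfun_apply T x = complex_of_real lm *\<^sub>C x" by (simp add: S_def shift_apply l_def)
    thus "x = 0" by (rule ker)
  qed
  have Sres: "blinfun_apply S (blinfun_apply (resolvent T z) v) = v + (z - l) *\<^sub>C blinfun_apply (resolvent T z) v"
    if zs: "z \<notin> op_spectrum T" for z v
    using res_left[OF zs, of v] by (simp add: S_def shift_apply scaleC_diff_left algebra_simps)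
  define \<xi> where "\<xi> = l + complex_of_real (r / 2)"
  have \<xi>l: "\<xi> \<noteq> l" "cmod (\<xi> - l) = r / 2" using r0 by (auto simp: \<xi>_def)
  have \<xi>s: "\<xi> \<notin> op_spectrum T" by (rule notspec) (use \<xi>l rl r0 in auto)
  have key: "cmod (cinner u (blinfun_apply (resolvent T \<xi>) v)) \<le> norm u * norm v / r" for u v
  proof -
    define f where "f z = cinner u (blinfun_apply (resolvent T z) v)" for z
    have fhol: "f holomorphic_on ball l \<epsilon> - {l}"
    proof -
      have "(\<lambda>z. cinner u (blinfun_apply id_blinfun (blinfun_apply (resolvent T z) v))) holomorphic_on ball l \<epsilon> - {l}"
      proof (rule holo_res1[OF Tc clinear_id])
        show "open (ball l \<epsilon> - {l})" by auto
        show "(ball l \<epsilon> - {l}) \<inter> op_spectrum T = {}"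
        proof (rule equals0I)
          fix z assume z: "z \<in> (ball l \<epsilon> - {l}) \<inter> op_spectrum T"
          hence "z \<noteq> l" "cmod (z - l) < \<epsilon>" by (auto simp: dist_norm norm_minus_commute)
          hence "z \<notin> op_spectrum T" by (rule notspec)
          thus False using z by blast
        qed
      qed
      thus ?thesis by (simp add: f_def[abs_def])
    qed
    have lim0: "((\<lambda>z. (z - l) * f z) \<longlongrightarrow> 0) (at l)"
    proof (rule tendstoI)
      fix e :: real assume e: "e > 0"
      define K where "K = norm v + 1"
      have K0: "K > 0" by (simp add: K_def add_nonneg_pos)
      obtain y where y: "norm (u - blinfun_apply S y) < e / (2 * K)" using dense[of "e / (2 * K)"] e K0 by auto
      define Y where "Y = norm y + 1"
      have Y0: "Y > 0" by (simp add: Y_def add_nonneg_pos)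
      define \<rho> where "\<rho> = min r (e / (4 * Y * K))"
      have \<rho>0: "\<rho> > 0" using r0 e Y0 K0 by (simp add: \<rho>_def)
      show "eventually (\<lambda>z. dist ((z - l) * f z) 0 < e) (at l)"
        unfolding eventually_at
      proof (intro exI[of _ \<rho>] conjI ballI impI)
        show "\<rho> > 0" by (rule \<rho>0)
        fix z assume zU: "z \<in> UNIV" and zz: "z \<noteq> l \<and> dist z l < \<rho>"
        define t where "t = cmod (z - l)"
        have tr: "t < \<rho>" using zz by (simp add: t_def dist_norm)
        have t0: "t \<ge> 0" by (simp add: t_def)
        have zr: "cmod (z - l) \<le> r" using tr by (simp add: t_def \<rho>_def)
        have zs: "z \<notin> op_spectrum T" using notspec zz zr rl by auto
        define Rv where "Rv = blinfun_apply (resolvent T z) v"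
        have tR: "t * norm Rv \<le> norm v" unfolding t_def Rv_def by (rule resb) (use zz zr in auto)
        have dec: "(z - l) * f z = (z - l) * cinner (u - blinfun_apply S y) Rv
             + ((z - l) * cinner y v + (z - l) * (z - l) * cinner y Rv)"
        proof -
          have "cinner (blinfun_apply S y) Rv = cinner y (blinfun_apply S Rv)" by (rule sa_sym[OF Ssa])
          also have "\<dots> = cinner y v + (z - l) * cinner y Rv"
            by (simp add: Rv_def Sres[OF zs] cinner_add_right cinner_scaleC_right)
          finally have "cinner (blinfun_apply S y) Rv = cinner y v + (z - l) * cinner y Rv" .
          hence fz: "f z = cinner (u - blinfun_apply S y) Rv + (cinner y v + (z - l) * cinner y Rv)"
            by (simp add: f_def Rv_def cinner_diff_left)
          show ?thesis unfolding fz by (simp add: distrib_left mult.assoc)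
        qed
        have A1: "cmod ((z - l) * cinner (u - blinfun_apply S y) Rv) \<le> e / 2"
        proof -
          have "cmod ((z - l) * cinner (u - blinfun_apply S y) Rv) \<le> t * (norm (u - blinfun_apply S y) * norm Rv)"
            by (simp add: t_def norm_mult mult_left_mono cinner_Cauchy_Schwarz)
          also have "\<dots> = norm (u - blinfun_apply S y) * (t * norm Rv)" by (simp add: algebra_simps)
          also have "\<dots> \<le> norm (u - blinfun_apply S y) * norm v" using tR by (simp add: mult_left_mono)
          also have "\<dots> \<le> (e / (2 * K)) * norm v" by (rule mult_right_mono) (use y in auto)
          also have "\<dots> \<le> (e / (2 * K)) * K" using e K0 by (intro mult_left_mono) (auto simp: K_def)
          also have "\<dots> = e / 2" using K0 by simp
          finally show ?thesis .
        qed
        have A2: "cmod ((z - l) * cinner y v + (z - l) * (z - l) * cinner y Rv) < e / 2"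
        proof -
          have b1: "cmod ((z - l) * cinner y v) \<le> t * (norm y * norm v)"
            by (simp add: t_def norm_mult mult_left_mono cinner_Cauchy_Schwarz)
          have "cmod ((z - l) * (z - l) * cinner y Rv) \<le> t * t * (norm y * norm Rv)"
            by (simp add: t_def norm_mult mult_left_mono cinner_Cauchy_Schwarz)
          also have "\<dots> = t * (norm y * (t * norm Rv))" by (simp add: algebra_simps)
          also have "\<dots> \<le> t * (norm y * norm v)"
            using tR t0 by (intro mult_left_mono) auto
          finally have b2: "cmod ((z - l) * (z - l) * cinner y Rv) \<le> t * (norm y * norm v)" .
          have "cmod ((z - l) * cinner y v + (z - l) * (z - l) * cinner y Rv)
              \<le> cmod ((z - l) * cinner y v) + cmod ((z - l) * (z - l) * cinner y Rv)" by (rule norm_triangle_ineq)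
          hence "cmod ((z - l) * cinner y v + (z - l) * (z - l) * cinner y Rv) \<le> 2 * t * (norm y * norm v)"
            using b1 b2 by linarith
          also have "\<dots> \<le> 2 * t * (Y * K)"
            using t0 by (intro mult_left_mono mult_mono) (auto simp: Y_def K_def)
          also have "\<dots> < 2 * \<rho> * (Y * K)" using tr Y0 K0 by simp
          also have "\<dots> \<le> 2 * (e / (4 * Y * K)) * (Y * K)"
            using Y0 K0 by (intro mult_right_mono mult_left_mono) (auto simp: \<rho>_def)
          also have "\<dots> = e / 2" using Y0 K0 by simp
          finally show ?thesis .
        qed
        have "cmod ((z - l) * f z) \<le> cmod ((z - l) * cinner (u - blinfun_apply S y) Rv)
             + cmod ((z - l) * cinner y v + (z - l) * (z - l) * cinner y Rv)"
          unfolding dec by (rule norm_triangle_ineq)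
        also have "\<dots> < e" using A1 A2 by simp
        finally show "dist ((z - l) * f z) 0 < e" by simp
      qed
    qed
    define k where "k z = (if z = l then 0 else (z - l) * f z)" for z
    have khol: "k holomorphic_on ball l \<epsilon>"
    proof -
      have "(\<lambda>z. (z - l) * f z) holomorphic_on ball l \<epsilon> - {l}" by (intro holomorphic_intros fhol)
      from removable_singularity[OF this _ lim0] have "(\<lambda>y. if y = l then 0 else (y - l) * f y) holomorphic_on ball l \<epsilon>" by simp
      moreover have "k = (\<lambda>y. if y = l then 0 else (y - l) * f y)" by (rule ext) (simp add: k_def)
      ultimately show ?thesis by simp
    qed
    have lb: "l \<in> ball l \<epsilon>" using eps by simp
    then obtain f' where kd: "(k has_field_derivative f') (at l)"
      using khol unfolding holomorphic_on_open[OF open_ball] by blast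
    have flim: "(f \<longlongrightarrow> f') (at l)"
    proof -
      have "((\<lambda>z. (k z - k l) / (z - l)) \<longlongrightarrow> f') (at l)" using kd by (simp add: has_field_derivative_iff)
      moreover have "eventually (\<lambda>z. (k z - k l) / (z - l) = f z) (at l)"
        unfolding eventually_at by (intro exI[of _ 1]) (auto simp: k_def)
      ultimately show ?thesis by (rule Lim_transform_eventually)
    qed
    define F where "F z = (if z = l then f' else f z)" for z
    have Fe: "F = (\<lambda>y. if y = l then f' else f y)" by (rule ext) (simp add: F_def)
    have Fhol: "F holomorphic_on ball l \<epsilon>"
      using removable_singularity[OF fhol _ flim] unfolding Fe by simp
    have "norm (F \<xi>) \<le> norm u * norm v / r"
    proof (rule maximum_modulus_frontier[of F "cball l r"])
      show "F holomorphic_on interior (cball l r)"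
        by (rule holomorphic_on_subset[OF Fhol]) (use rl in auto)
      show "continuous_on (closure (cball l r)) F"
        by (rule holomorphic_on_imp_continuous_on, rule holomorphic_on_subset[OF Fhol]) (use rl in auto)
      show "bounded (cball l r)" by simp
      show "\<xi> \<in> cball l r" using \<xi>l r0 by (simp add: dist_norm norm_minus_commute)
      fix z assume "z \<in> frontier (cball l r)"
      hence zr: "cmod (z - l) = r" by (simp add: dist_norm norm_minus_commute)
      hence zl: "z \<noteq> l" using r0 by auto
      have "cmod (F z) = cmod (cinner u (blinfun_apply (resolvent T z) v))" using zl by (simp add: F_def f_def)
      also have "\<dots> \<le> norm u * norm (blinfun_apply (resolvent T z) v)" by (rule cinner_Cauchy_Schwarz)
      also have "\<dots> \<le> norm u * (norm v / r)"
      proof (rule mult_left_mono)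
        have "r * norm (blinfun_apply (resolvent T z) v) \<le> norm v" using resb[OF zl, of v] zr by simp
        thus "norm (blinfun_apply (resolvent T z) v) \<le> norm v / r" using r0 by (simp add: field_simps)
      qed simp
      finally show "norm (F z) \<le> norm u * norm v / r" by simp
    qed
    thus ?thesis using \<xi>l by (simp add: F_def f_def)
  qed
  have nR: "norm (resolvent T \<xi>) \<le> 1 / r"
  proof (rule norm_blinfun_bound)
    fix v
    have "norm (blinfun_apply (resolvent T \<xi>) v) \<le> norm v / r"
      by (rule norm_le_from_cinner) (use key r0 in \<open>auto simp: field_simps\<close>)
    thus "norm (blinfun_apply (resolvent T \<xi>) v) \<le> 1 / r * norm v" by simp
  qed (use r0 in simp)
  have "cmod (l - \<xi>) * norm (resolvent T \<xi>) \<le> (r / 2) * (1 / r)"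
    using \<xi>l nR by (intro mult_mono) (auto simp: norm_minus_commute)
  also have "\<dots> < 1" using r0 by simp
  finally have "l \<notin> op_spectrum T" by (rule res_perturb(1)[OF Tc \<xi>s])
  thus ?thesis by (simp add: l_def)
qed

lemma sum_orth_norm:
  fixes f :: "nat \<Rightarrow> 'a::complex_inner"
  assumes "finite I" "\<And>i j. i \<in> I \<Longrightarrow> j \<in> I \<Longrightarrow> i \<noteq> j \<Longrightarrow> cinner (f i) (f j) = 0"
  shows "(norm (\<Sum>i\<in>I. f i))^2 = (\<Sum>i\<in>I. (norm (f i))^2)"
  using assms
proof (induction I rule: finite_induct)
  case empty thus ?case by simp
next
  case (insert a I)
  have "cinner (f a) (\<Sum>i\<in>I. f i) = (\<Sum>i\<in>I. cinner (f a) (f i))" by (rule cinner_sum_right)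
  also have "\<dots> = 0" using insert.prems insert.hyps by (intro sum.neutral ballI) auto
  finally have "(norm (f a + (\<Sum>i\<in>I. f i)))^2 = (norm (f a))^2 + (norm (\<Sum>i\<in>I. f i))^2"
    by (rule norm_pythag)
  moreover have "(norm (\<Sum>i\<in>I. f i))^2 = (\<Sum>i\<in>I. (norm (f i))^2)"
    by (intro insert.IH insert.prems) auto
  ultimately show ?case using insert.hyps by simp
qed

lemma inverse_commute:
  assumes A: "invertible_op A" and c: "\<And>y. blinfun_apply A (blinfun_apply B y) = blinfun_apply B (blinfun_apply A y)"
  shows "blinfun_apply (inverse_op A) (blinfun_apply B y) = blinfun_apply B (blinfun_apply (inverse_op A) y)"
proof -
  have "blinfun_apply (inverse_op A) (blinfun_apply B y)
      = blinfun_apply (inverse_op A) (blinfun_apply B (blinfun_apply A (blinfun_apply (inverse_op A) y)))"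
    using A by simp
  also have "\<dots> = blinfun_apply (inverse_op A) (blinfun_apply A (blinfun_apply B (blinfun_apply (inverse_op A) y)))"
    by (simp only: c)
  also have "\<dots> = blinfun_apply B (blinfun_apply (inverse_op A) y)" using A by simp
  finally show ?thesis .
qed

definition espace :: "('a::complex_normed_vector \<Rightarrow>\<^sub>L 'a) \<Rightarrow> complex \<Rightarrow> 'a set" where
  "espace H \<mu> = {x. blinfun_apply H x = \<mu> *\<^sub>C x}"

lemma espace_kernel: "espace H \<mu> = {x. blinfun_apply (H - cscaleL \<mu> id_blinfun) x = 0}"
  by (auto simp: espace_def shift_apply)

lemma espace_sub: "clinear_op H \<Longrightarrow> csubspace (espace H \<mu>)"
  unfolding espace_kernel by (intro csubspace_kernel clinear_shift)

lemma espace_closed: "closed (espace H \<mu>)"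
  unfolding espace_kernel by (rule closed_kernel)

definition PJ :: "('a::{complex_inner,complete_space} \<Rightarrow>\<^sub>L 'a) \<Rightarrow> (nat \<Rightarrow> complex) \<Rightarrow> nat \<Rightarrow> ('a \<Rightarrow>\<^sub>L 'a)" where
  "PJ H lam j = projL (espace H (lam j))"
definition PS :: "('a::{complex_inner,complete_space} \<Rightarrow>\<^sub>L 'a) \<Rightarrow> (nat \<Rightarrow> complex) \<Rightarrow> nat \<Rightarrow> ('a \<Rightarrow>\<^sub>L 'a)" where
  "PS H lam m = (\<Sum>j\<in>{1..m}. PJ H lam j)"
definition QS :: "('a::{complex_inner,complete_space} \<Rightarrow>\<^sub>L 'a) \<Rightarrow> (nat \<Rightarrow> complex) \<Rightarrow> nat \<Rightarrow> ('a \<Rightarrow>\<^sub>L 'a)" where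
  "QS H lam m = id_blinfun - PS H lam m"

definition HC :: "('a::{complex_inner,complete_space} \<Rightarrow>\<^sub>L 'a) \<Rightarrow> (nat \<Rightarrow> complex) \<Rightarrow> nat \<Rightarrow> real \<Rightarrow> ('a \<Rightarrow>\<^sub>L 'a)" where
  "HC H lam m c = (H o\<^sub>L QS H lam m) + cscaleL (complex_of_real c) (PS H lam m)"

context
  fixes H :: "'a::{complex_inner,complete_space} \<Rightarrow>\<^sub>L 'a" and lam :: "nat \<Rightarrow> complex" and m :: nat
  assumes H_sa: "self_adjoint_op H"
    and eig: "\<forall>j\<in>{1..m}. is_eigenvalue H (lam j)"
    and distinct: "inj_on lam {1..m}"
begin


lemma Hc: "clinear_op H" using H_sa by (rule sa_clinear)

lemma lam_real: "j \<in> {1..m} \<Longrightarrow> lam j = complex_of_real (Re (lam j))"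
proof -
  assume j: "j \<in> {1..m}"
  then obtain x where "x \<noteq> 0" "blinfun_apply H x = lam j *\<^sub>C x" using eig unfolding is_eigenvalue_def by blast
  thus ?thesis using sa_eigen_real[OF H_sa] by blast
qed

lemma lam_cnj: "j \<in> {1..m} \<Longrightarrow> cnj (lam j) = lam j"
  by (subst (1 2) lam_real) auto

lemma esp: "csubspace (espace H (lam j))" "closed (espace H (lam j))"
  by (rule espace_sub[OF Hc]) (rule espace_closed)

lemma esp_orth:
  assumes j: "j \<in> {1..m}" and k: "k \<in> {1..m}" and jk: "j \<noteq> k"
    and e: "e \<in> espace H (lam j)" and f: "f \<in> espace H (lam k)"
  shows "cinner e f = 0"
proof -
  have "cinner (blinfun_apply H e) f = cinner e (blinfun_apply H f)" by (rule sa_sym[OF H_sa])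
  hence "cnj (lam j) * cinner e f = lam k * cinner e f"
    using e f by (simp add: espace_def cinner_scaleC_left cinner_scaleC_right)
  hence "(lam j - lam k) * cinner e f = 0" using lam_cnj[OF j] by (simp add: algebra_simps)
  moreover have "lam j \<noteq> lam k" using distinct j k jk by (auto dest: inj_onD)
  ultimately show ?thesis by simp
qed

lemma PJ_apply: "blinfun_apply (PJ H lam j) x = proj (espace H (lam j)) x"
  unfolding PJ_def by (rule projL_apply[OF esp])

lemma PJ_in: "blinfun_apply (PJ H lam j) x \<in> espace H (lam j)"
  unfolding PJ_apply by (rule proj_props(1)[OF esp])

lemma H_PJ: "blinfun_apply H (blinfun_apply (PJ H lam j) x) = lam j *\<^sub>C blinfun_apply (PJ H lam j) x"
  using PJ_in[of j x] by (simp add: espace_def)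

lemma PJ_orth: "e \<in> espace H (lam j) \<Longrightarrow> cinner e (x - blinfun_apply (PJ H lam j) x) = 0"
  unfolding PJ_apply by (rule proj_props(2)[OF esp])

lemma PJ_fix: "x \<in> espace H (lam j) \<Longrightarrow> blinfun_apply (PJ H lam j) x = x"
  unfolding PJ_apply by (rule proj_fix[OF esp])

lemma PJ_PJ: "j \<in> {1..m} \<Longrightarrow> k \<in> {1..m} \<Longrightarrow> j \<noteq> k \<Longrightarrow> blinfun_apply (PJ H lam j) (blinfun_apply (PJ H lam k) x) = 0"
  unfolding PJ_apply[of j] by (rule proj_zero[OF esp]) (rule esp_orth, auto intro: PJ_in)

lemma PJ_idem: "blinfun_apply (PJ H lam j) (blinfun_apply (PJ H lam j) x) = blinfun_apply (PJ H lam j) x"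
  by (rule PJ_fix[OF PJ_in])

lemma PJ_sa: "cinner (blinfun_apply (PJ H lam j) x) y = cinner x (blinfun_apply (PJ H lam j) y)"
  unfolding PJ_apply by (rule proj_selfadj[OF esp])

lemma PJ_clinear: "clinear_op (PJ H lam j)"
  unfolding PJ_def by (rule clinear_projL[OF esp])

lemma PJ_norm: "norm (blinfun_apply (PJ H lam j) x) \<le> norm x"
  unfolding PJ_apply by (rule proj_norm[OF esp])

lemma PJ_H: "j \<in> {1..m} \<Longrightarrow> blinfun_apply (PJ H lam j) (blinfun_apply H x) = lam j *\<^sub>C blinfun_apply (PJ H lam j) x"
  unfolding PJ_apply[of j]
proof (rule proj_unique[OF esp])
  assume j: "j \<in> {1..m}"
  show "lam j *\<^sub>C proj (espace H (lam j)) x \<in> espace H (lam j)"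
    by (rule csubspace_scaleC[OF esp(1)]) (rule proj_props(1)[OF esp])
  fix e assume e: "e \<in> espace H (lam j)"
  have "cinner e (blinfun_apply H x) = cinner (blinfun_apply H e) x" by (rule sa_sym[OF H_sa, symmetric])
  also have "\<dots> = lam j * cinner e x" using e lam_cnj[OF j] by (simp add: espace_def cinner_scaleC_left)
  finally have a: "cinner e (blinfun_apply H x) = lam j * cinner e x" .
  have b: "cinner e (x - proj (espace H (lam j)) x) = 0" by (rule proj_props(2)[OF esp e])
  show "cinner e (blinfun_apply H x - lam j *\<^sub>C proj (espace H (lam j)) x) = 0"
    using a b by (simp add: cinner_diff_right cinner_scaleC_right algebra_simps)
qed

lemma PS_apply: "blinfun_apply (PS H lam m) x = (\<Sum>j\<in>{1..m}. blinfun_apply (PJ H lam j) x)"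
  unfolding PS_def by (rule blinfun_apply_sum)

lemma QS_apply: "blinfun_apply (QS H lam m) x = x - blinfun_apply (PS H lam m) x"
  unfolding QS_def by (simp add: blinfun.diff_left)

lemma PJ_PS: "k \<in> {1..m} \<Longrightarrow> blinfun_apply (PJ H lam k) (blinfun_apply (PS H lam m) x) = blinfun_apply (PJ H lam k) x"
proof -
  assume k: "k \<in> {1..m}"
  have "blinfun_apply (PJ H lam k) (blinfun_apply (PS H lam m) x) = (\<Sum>j\<in>{1..m}. blinfun_apply (PJ H lam k) (blinfun_apply (PJ H lam j) x))"
    by (simp add: PS_apply blinfun.sum_right)
  also have "\<dots> = (\<Sum>j\<in>{1..m}. if j = k then blinfun_apply (PJ H lam k) x else 0)"
  proof (rule sum.cong[OF refl])
    fix j assume j: "j \<in> {1..m}"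
    show "blinfun_apply (PJ H lam k) (blinfun_apply (PJ H lam j) x) = (if j = k then blinfun_apply (PJ H lam k) x else 0)"
    proof (cases "j = k")
      case True thus ?thesis by (simp add: PJ_idem)
    next
      case False hence "k \<noteq> j" by simp
      thus ?thesis using PJ_PJ[OF k j] False by simp
    qed
  qed
  also have "\<dots> = blinfun_apply (PJ H lam k) x" using k by simp
  finally show ?thesis .
qed

lemma PJ_QS: "k \<in> {1..m} \<Longrightarrow> blinfun_apply (PJ H lam k) (blinfun_apply (QS H lam m) x) = 0"
  by (simp add: QS_apply blinfun.diff_right PJ_PS)

lemma PS_PS: "blinfun_apply (PS H lam m) (blinfun_apply (PS H lam m) x) = blinfun_apply (PS H lam m) x"
proof -
  have "blinfun_apply (PS H lam m) (blinfun_apply (PS H lam m) x) = (\<Sum>j\<in>{1..m}. blinfun_apply (PJ H lam j) (blinfun_apply (PS H lam m) x))"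
    by (rule PS_apply)
  also have "\<dots> = (\<Sum>j\<in>{1..m}. blinfun_apply (PJ H lam j) x)" by (rule sum.cong[OF refl]) (rule PJ_PS)
  also have "\<dots> = blinfun_apply (PS H lam m) x" by (rule PS_apply[symmetric])
  finally show ?thesis .
qed

lemma PS_QS: "blinfun_apply (PS H lam m) (blinfun_apply (QS H lam m) x) = 0"
proof -
  have "blinfun_apply (PS H lam m) (blinfun_apply (QS H lam m) x) = (\<Sum>j\<in>{1..m}. blinfun_apply (PJ H lam j) (blinfun_apply (QS H lam m) x))"
    by (rule PS_apply)
  also have "\<dots> = (\<Sum>j\<in>{1..m}. 0)" by (rule sum.cong[OF refl]) (rule PJ_QS)
  finally show ?thesis by simp
qed

lemma QS_QS: "blinfun_apply (QS H lam m) (blinfun_apply (QS H lam m) x) = blinfun_apply (QS H lam m) x"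
  by (subst (1) QS_apply) (simp add: PS_QS)

lemma QS_PS: "blinfun_apply (QS H lam m) (blinfun_apply (PS H lam m) x) = 0"
  by (simp add: QS_apply PS_PS)

lemma PS_clinear: "clinear_op (PS H lam m)" unfolding PS_def by (rule clinear_sum) (rule PJ_clinear)
lemma QS_clinear: "clinear_op (QS H lam m)" unfolding QS_def by (rule clinear_diff[OF clinear_id PS_clinear])

lemma H_PS: "blinfun_apply H (blinfun_apply (PS H lam m) x) = blinfun_apply (PS H lam m) (blinfun_apply H x)"
proof -
  have "blinfun_apply H (blinfun_apply (PS H lam m) x) = (\<Sum>j\<in>{1..m}. lam j *\<^sub>C blinfun_apply (PJ H lam j) x)"
    by (simp add: PS_apply blinfun.sum_right H_PJ)
  also have "\<dots> = blinfun_apply (PS H lam m) (blinfun_apply H x)"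
    by (simp add: PS_apply PJ_H)
  finally show ?thesis .
qed

lemma H_QS: "blinfun_apply H (blinfun_apply (QS H lam m) x) = blinfun_apply (QS H lam m) (blinfun_apply H x)"
  by (simp add: QS_apply blinfun.diff_right H_PS)

lemma PS_sa: "cinner (blinfun_apply (PS H lam m) x) y = cinner x (blinfun_apply (PS H lam m) y)"
  by (simp add: PS_apply cinner_sum_left cinner_sum_right PJ_sa)

lemma QS_sa: "cinner (blinfun_apply (QS H lam m) x) y = cinner x (blinfun_apply (QS H lam m) y)"
  by (simp add: QS_apply cinner_diff_left cinner_diff_right PS_sa)

lemma PS_QS_orth: "cinner (blinfun_apply (PS H lam m) x) (blinfun_apply (QS H lam m) y) = 0"
  by (simp add: PS_sa PS_QS)

lemma norm_split: "(norm x)^2 = (norm (blinfun_apply (PS H lam m) x))^2 + (norm (blinfun_apply (QS H lam m) x))^2"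
proof -
  have "x = blinfun_apply (PS H lam m) x + blinfun_apply (QS H lam m) x" by (simp add: QS_apply)
  hence "(norm x)^2 = (norm (blinfun_apply (PS H lam m) x + blinfun_apply (QS H lam m) x))^2" by simp
  also have "\<dots> = (norm (blinfun_apply (PS H lam m) x))^2 + (norm (blinfun_apply (QS H lam m) x))^2"
    by (rule norm_pythag[OF PS_QS_orth])
  finally show ?thesis .
qed

lemma norm_PS: "(norm (blinfun_apply (PS H lam m) x))^2 = (\<Sum>j\<in>{1..m}. (norm (blinfun_apply (PJ H lam j) x))^2)"
  unfolding PS_apply
  by (rule sum_orth_norm) (auto intro: esp_orth PJ_in)

lemma QS_norm: "norm (blinfun_apply (QS H lam m) x) \<le> norm x"
proof -
  have "(norm (blinfun_apply (QS H lam m) x))^2 \<le> (norm x)^2" using norm_split[of x] by simp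
  thus ?thesis by (simp add: power2_le_iff_abs_le)
qed

lemma HC_apply: "blinfun_apply (HC H lam m c) x = blinfun_apply H (blinfun_apply (QS H lam m) x) + complex_of_real c *\<^sub>C blinfun_apply (PS H lam m) x"
  unfolding HC_def by (simp add: blinfun.add_left)

lemma HC_clinear: "clinear_op (HC H lam m c)"
  unfolding HC_def by (intro clinear_add clinear_compose clinear_cscaleL Hc QS_clinear PS_clinear)

lemma HC_sa: "self_adjoint_op (HC H lam m c)"
  unfolding self_adjoint_op_def
proof (intro conjI allI HC_clinear)
  fix x y
  have "cinner (blinfun_apply H (blinfun_apply (QS H lam m) x)) y = cinner x (blinfun_apply H (blinfun_apply (QS H lam m) y))"
    by (simp add: sa_sym[OF H_sa] QS_sa H_QS)
  moreover have "cinner (complex_of_real c *\<^sub>C blinfun_apply (PS H lam m) x) y = cinner x (complex_of_real c *\<^sub>C blinfun_apply (PS H lam m) y)"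
    by (simp add: cinner_scaleC_left cinner_scaleC_right PS_sa)
  ultimately show "cinner (blinfun_apply (HC H lam m c) x) y = cinner x (blinfun_apply (HC H lam m c) y)"
    by (simp add: HC_apply cinner_add_left cinner_add_right)
qed

lemma HC_QS: "blinfun_apply (HC H lam m c) (blinfun_apply (QS H lam m) x) = blinfun_apply H (blinfun_apply (QS H lam m) x)"
  by (simp add: HC_apply QS_QS PS_QS)

lemma QS_HC: "blinfun_apply (QS H lam m) (blinfun_apply (HC H lam m c) x) = blinfun_apply H (blinfun_apply (QS H lam m) x)"
  by (simp add: HC_apply blinfun.add_right clinear_opD[OF QS_clinear] QS_PS H_QS[symmetric] QS_QS)

lemma HC_QS_commute: "blinfun_apply (HC H lam m c) (blinfun_apply (QS H lam m) x) = blinfun_apply (QS H lam m) (blinfun_apply (HC H lam m c) x)"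
  by (simp only: HC_QS QS_HC)

lemma HC_PS: "blinfun_apply (HC H lam m c) (blinfun_apply (PS H lam m) x) = complex_of_real c *\<^sub>C blinfun_apply (PS H lam m) x"
  by (simp add: HC_apply QS_PS PS_PS)

lemma PJ_HC: "k \<in> {1..m} \<Longrightarrow> blinfun_apply (PJ H lam k) (blinfun_apply (HC H lam m c) x) = complex_of_real c *\<^sub>C blinfun_apply (PJ H lam k) x"
  by (simp add: HC_apply blinfun.add_right clinear_opD[OF PJ_clinear] PJ_H PJ_QS PJ_PS)

lemma HC_ker:
  assumes c: "complex_of_real c \<notin> lam ` {1..m}" and j: "j \<in> {1..m}"
    and x: "blinfun_apply (HC H lam m c) x = lam j *\<^sub>C x"
  shows "x = 0"
proof -
  have pk: "blinfun_apply (PJ H lam k) x = 0" if k: "k \<in> {1..m}" for k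
  proof -
    have "complex_of_real c *\<^sub>C blinfun_apply (PJ H lam k) x = lam j *\<^sub>C blinfun_apply (PJ H lam k) x"
      using PJ_HC[OF k, of c x] x by (simp add: clinear_opD[OF PJ_clinear])
    hence "(complex_of_real c - lam j) *\<^sub>C blinfun_apply (PJ H lam k) x = 0" by (simp add: scaleC_diff_left)
    moreover have "complex_of_real c - lam j \<noteq> 0" using c j by auto
    ultimately show ?thesis by (simp add: scaleC_eq_0_iff)
  qed
  have ps: "blinfun_apply (PS H lam m) x = 0" by (simp add: PS_apply pk)
  hence qs: "blinfun_apply (QS H lam m) x = x" by (simp add: QS_apply)
  have "blinfun_apply H x = lam j *\<^sub>C x" using x by (simp add: HC_apply ps qs)
  hence "x \<in> espace H (lam j)" by (simp add: espace_def)
  hence "x = blinfun_apply (PJ H lam j) x" by (simp add: PJ_fix)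
  also have "\<dots> = 0" by (rule pk[OF j])
  finally show ?thesis .
qed

lemma res_QS_commute:
  assumes z: "z \<notin> op_spectrum H"
  shows "blinfun_apply (resolvent H z) (blinfun_apply (QS H lam m) y) = blinfun_apply (QS H lam m) (blinfun_apply (resolvent H z) y)"
  unfolding resolvent_def
proof (rule inverse_commute)
  show "invertible_op (H - cscaleL z id_blinfun)" using z by (simp add: op_spectrum_def)
  fix y
  show "blinfun_apply (H - cscaleL z id_blinfun) (blinfun_apply (QS H lam m) y) = blinfun_apply (QS H lam m) (blinfun_apply (H - cscaleL z id_blinfun) y)"
    by (simp add: shift_apply H_QS blinfun.diff_right clinear_opD[OF QS_clinear])
qed

lemma resHC_QS_commute:
  assumes z: "z \<notin> op_spectrum (HC H lam m c)"
  shows "blinfun_apply (resolvent (HC H lam m c) z) (blinfun_apply (QS H lam m) y) = blinfun_apply (QS H lam m) (blinfun_apply (resolvent (HC H lam m c) z) y)"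
  unfolding resolvent_def
proof (rule inverse_commute)
  show "invertible_op (HC H lam m c - cscaleL z id_blinfun)" using z by (simp add: op_spectrum_def)
  fix y
  show "blinfun_apply (HC H lam m c - cscaleL z id_blinfun) (blinfun_apply (QS H lam m) y) = blinfun_apply (QS H lam m) (blinfun_apply (HC H lam m c - cscaleL z id_blinfun) y)"
    by (simp only: shift_apply HC_QS_commute blinfun.diff_right clinear_opD[OF QS_clinear])
qed

lemma HC_spec:
  assumes z: "z \<notin> op_spectrum H" and zc: "z \<noteq> complex_of_real c"
  shows "z \<notin> op_spectrum (HC H lam m c)"
proof -
  define d where "d = 1 / (complex_of_real c - z)"
  have dz: "d * (complex_of_real c - z) = 1" using zc by (simp add: d_def)
  define K where "K = (QS H lam m o\<^sub>L resolvent H z) + cscaleL d (PS H lam m)"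
  have Kx: "blinfun_apply K x = blinfun_apply (QS H lam m) (blinfun_apply (resolvent H z) x) + d *\<^sub>C blinfun_apply (PS H lam m) x" for x
    by (simp add: K_def blinfun.add_left)
  have Rc: "clinear_op (resolvent H z)" by (rule clinear_res[OF Hc z])
  have a1: "blinfun_apply (HC H lam m c - cscaleL z id_blinfun) (blinfun_apply K x) = x" for x
  proof -
    define Rx where "Rx = blinfun_apply (resolvent H z) x"
    have HR: "blinfun_apply H Rx - z *\<^sub>C Rx = x" unfolding Rx_def by (rule res_left[OF z])
    have "blinfun_apply (HC H lam m c - cscaleL z id_blinfun) (blinfun_apply K x)
        = (blinfun_apply H (blinfun_apply (QS H lam m) Rx) - z *\<^sub>C blinfun_apply (QS H lam m) Rx)
          + d *\<^sub>C (complex_of_real c *\<^sub>C blinfun_apply (PS H lam m) x - z *\<^sub>C blinfun_apply (PS H lam m) x)"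
      by (simp add: shift_apply Kx Rx_def blinfun.add_right clinear_opD[OF HC_clinear] HC_QS HC_PS
          scaleC_add_right scaleC_diff_right scaleC_scaleC mult.commute algebra_simps)
    also have "blinfun_apply H (blinfun_apply (QS H lam m) Rx) - z *\<^sub>C blinfun_apply (QS H lam m) Rx
        = blinfun_apply (QS H lam m) x"
    proof -
      have "blinfun_apply (QS H lam m) (blinfun_apply H Rx - z *\<^sub>C Rx) = blinfun_apply (QS H lam m) x" using HR by simp
      thus ?thesis by (simp add: H_QS blinfun.diff_right clinear_opD[OF QS_clinear])
    qed
    also have "d *\<^sub>C (complex_of_real c *\<^sub>C blinfun_apply (PS H lam m) x - z *\<^sub>C blinfun_apply (PS H lam m) x)
        = blinfun_apply (PS H lam m) x"
      by (simp add: scaleC_diff_left[symmetric] scaleC_scaleC dz scaleC_one)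
    finally show ?thesis by (simp add: QS_apply)
  qed
  have a2: "blinfun_apply K (blinfun_apply (HC H lam m c - cscaleL z id_blinfun) x) = x" for x
  proof -
    define q where "q = blinfun_apply (QS H lam m) x"
    define p where "p = blinfun_apply (PS H lam m) x"
    have xqp: "x = q + p" by (simp add: q_def p_def QS_apply)
    have e1: "blinfun_apply (HC H lam m c - cscaleL z id_blinfun) x
        = (blinfun_apply H q - z *\<^sub>C q) + (complex_of_real c - z) *\<^sub>C p"
      by (simp add: shift_apply HC_apply q_def[symmetric] p_def[symmetric] xqp[symmetric]
          scaleC_diff_left scaleC_add_right) (simp add: xqp scaleC_add_right algebra_simps)
    have Rq: "blinfun_apply (resolvent H z) (blinfun_apply H q - z *\<^sub>C q) = q" by (rule res_right[OF z])
    have QRp: "blinfun_apply (QS H lam m) (blinfun_apply (resolvent H z) p) = 0"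
      by (simp add: p_def res_QS_commute[OF z, symmetric] QS_PS)
    have Qq: "blinfun_apply (QS H lam m) q = q" by (simp add: q_def QS_QS)
    have Pq: "blinfun_apply (PS H lam m) (blinfun_apply H q - z *\<^sub>C q) = 0"
      by (simp add: q_def H_PS[symmetric] PS_QS blinfun.diff_right clinear_opD[OF PS_clinear])
    have Pp: "blinfun_apply (PS H lam m) p = p" by (simp add: p_def PS_PS)
    have "blinfun_apply K (blinfun_apply (HC H lam m c - cscaleL z id_blinfun) x)
        = (q + (complex_of_real c - z) *\<^sub>C blinfun_apply (QS H lam m) (blinfun_apply (resolvent H z) p))
          + d *\<^sub>C ((complex_of_real c - z) *\<^sub>C p)"
      by (simp add: Kx e1 blinfun.add_right clinear_opD[OF Rc] clinear_opD[OF QS_clinear]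
          clinear_opD[OF PS_clinear] Rq Qq Pq Pp)
    also have "\<dots> = q + p" by (simp add: QRp scaleC_scaleC dz scaleC_one)
    finally show ?thesis using xqp by simp
  qed
  have "invertible_op (HC H lam m c - cscaleL z id_blinfun)" by (rule invertible_opI(1)[OF a1 a2])
  thus ?thesis by (simp add: op_spectrum_def)
qed

lemma R_decomp:
  assumes z: "z \<notin> op_spectrum H" and zc: "z \<notin> op_spectrum (HC H lam m c)"
    and zl: "z \<notin> lam ` {1..m}"
  shows "blinfun_apply (resolvent H z) x
       = blinfun_apply (resolvent (HC H lam m c) z) (blinfun_apply (QS H lam m) x)
         + (\<Sum>k\<in>{1..m}. (1 / (lam k - z)) *\<^sub>C blinfun_apply (PJ H lam k) x)"
proof -
  define y where "y = blinfun_apply (resolvent (HC H lam m c) z) (blinfun_apply (QS H lam m) x)"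
  define w where "w = (\<Sum>k\<in>{1..m}. (1 / (lam k - z)) *\<^sub>C blinfun_apply (PJ H lam k) x)"
  have yq: "y = blinfun_apply (QS H lam m) (blinfun_apply (resolvent (HC H lam m c) z) x)"
    unfolding y_def by (rule resHC_QS_commute[OF zc])
  have Hy: "blinfun_apply H y - z *\<^sub>C y = blinfun_apply (QS H lam m) x"
  proof -
    have "blinfun_apply H y = blinfun_apply (HC H lam m c) y" unfolding yq by (simp only: HC_QS)
    thus ?thesis using res_left[OF zc, of "blinfun_apply (QS H lam m) x"] by (simp add: y_def)
  qed
  have Hw: "blinfun_apply H w - z *\<^sub>C w = blinfun_apply (PS H lam m) x"
  proof -
    have "blinfun_apply H w - z *\<^sub>C w = (\<Sum>k\<in>{1..m}. (1 / (lam k - z)) *\<^sub>C ((lam k - z) *\<^sub>C blinfun_apply (PJ H lam k) x))"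
      by (simp add: w_def blinfun.sum_right clinear_opD[OF Hc] H_PJ scaleC_sum_right sum_subtractf[symmetric]
          scaleC_diff_left scaleC_diff_right scaleC_scaleC algebra_simps)
    also have "\<dots> = (\<Sum>k\<in>{1..m}. blinfun_apply (PJ H lam k) x)"
    proof (rule sum.cong[OF refl])
      fix k assume k: "k \<in> {1..m}"
      have "lam k - z \<noteq> 0" using zl k by auto
      thus "(1 / (lam k - z)) *\<^sub>C ((lam k - z) *\<^sub>C blinfun_apply (PJ H lam k) x) = blinfun_apply (PJ H lam k) x"
        by (simp add: scaleC_scaleC scaleC_one)
    qed
    finally show ?thesis by (simp add: PS_apply)
  qed
  have "blinfun_apply H (y + w) - z *\<^sub>C (y + w) = x"
    using Hy Hw by (simp add: blinfun.add_right scaleC_add_right QS_apply algebra_simps)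
  hence "blinfun_apply (resolvent H z) x = y + w" using res_right[OF z, of "y + w"] by simp
  thus ?thesis by (simp add: y_def w_def)
qed

lemma F_expand:
  assumes Xc: "clinear_op X"
    and z: "z \<notin> op_spectrum H" and zc: "z \<notin> op_spectrum (HC H lam m c)" and zl: "z \<notin> lam ` {1..m}"
  shows "cinner u (blinfun_apply (resolvent H z) (blinfun_apply X (blinfun_apply (resolvent H z) v)))
    = cinner u (blinfun_apply (resolvent (HC H lam m c) z) (blinfun_apply (QS H lam m) (blinfun_apply X
          (blinfun_apply (resolvent (HC H lam m c) z) (blinfun_apply (QS H lam m) v)))))
    + (\<Sum>k\<in>{1..m}. (1 / (lam k - z)) * cinner u (blinfun_apply (resolvent (HC H lam m c) z)
          (blinfun_apply (QS H lam m) (blinfun_apply X (blinfun_apply (PJ H lam k) v)))))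
    + ((\<Sum>j\<in>{1..m}. (1 / (lam j - z)) * cinner (blinfun_apply (PJ H lam j) u)
          (blinfun_apply X (blinfun_apply (resolvent (HC H lam m c) z) (blinfun_apply (QS H lam m) v))))
     + (\<Sum>j\<in>{1..m}. (1 / (lam j - z)) * (\<Sum>k\<in>{1..m}. (1 / (lam k - z)) *
          cinner (blinfun_apply (PJ H lam j) u) (blinfun_apply X (blinfun_apply (PJ H lam k) v)))))"
proof -
  define R' where "R' = resolvent (HC H lam m c) z"
  define Q where "Q = QS H lam m"
  have R'c: "clinear_op R'" unfolding R'_def by (rule clinear_res[OF HC_clinear zc])
  have Qc: "clinear_op Q" unfolding Q_def by (rule QS_clinear)
  define w0 where "w0 = blinfun_apply R' (blinfun_apply Q v)"
  have w: "blinfun_apply (resolvent H z) v = w0 + (\<Sum>k\<in>{1..m}. (1 / (lam k - z)) *\<^sub>C blinfun_apply (PJ H lam k) v)"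
    unfolding w0_def R'_def Q_def by (rule R_decomp[OF z zc zl])
  have Xw: "blinfun_apply X (blinfun_apply (resolvent H z) v)
      = blinfun_apply X w0 + (\<Sum>k\<in>{1..m}. (1 / (lam k - z)) *\<^sub>C blinfun_apply X (blinfun_apply (PJ H lam k) v))"
    by (simp add: w blinfun.add_right blinfun.sum_right clinear_opD[OF Xc])
  define y where "y = blinfun_apply X (blinfun_apply (resolvent H z) v)"
  have Ry: "blinfun_apply (resolvent H z) y = blinfun_apply R' (blinfun_apply Q y)
      + (\<Sum>j\<in>{1..m}. (1 / (lam j - z)) *\<^sub>C blinfun_apply (PJ H lam j) y)"
    unfolding R'_def Q_def by (rule R_decomp[OF z zc zl])
  have t1: "cinner u (blinfun_apply R' (blinfun_apply Q y))
      = cinner u (blinfun_apply R' (blinfun_apply Q (blinfun_apply X w0)))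
        + (\<Sum>k\<in>{1..m}. (1 / (lam k - z)) * cinner u (blinfun_apply R' (blinfun_apply Q (blinfun_apply X (blinfun_apply (PJ H lam k) v)))))"
    by (simp add: y_def Xw blinfun.add_right blinfun.sum_right clinear_opD[OF Qc] clinear_opD[OF R'c]
        cinner_add_right cinner_sum_right cinner_scaleC_right)
  have t2: "cinner u (\<Sum>j\<in>{1..m}. (1 / (lam j - z)) *\<^sub>C blinfun_apply (PJ H lam j) y)
      = (\<Sum>j\<in>{1..m}. (1 / (lam j - z)) * cinner (blinfun_apply (PJ H lam j) u) (blinfun_apply X w0))
       + (\<Sum>j\<in>{1..m}. (1 / (lam j - z)) * (\<Sum>k\<in>{1..m}. (1 / (lam k - z)) *
          cinner (blinfun_apply (PJ H lam j) u) (blinfun_apply X (blinfun_apply (PJ H lam k) v))))"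
  proof -
    have "cinner u (\<Sum>j\<in>{1..m}. (1 / (lam j - z)) *\<^sub>C blinfun_apply (PJ H lam j) y)
        = (\<Sum>j\<in>{1..m}. (1 / (lam j - z)) * cinner (blinfun_apply (PJ H lam j) u) y)"
      by (simp add: cinner_sum_right cinner_scaleC_right PJ_sa)
    also have "\<dots> = (\<Sum>j\<in>{1..m}. (1 / (lam j - z)) * cinner (blinfun_apply (PJ H lam j) u) (blinfun_apply X w0)
        + (1 / (lam j - z)) * (\<Sum>k\<in>{1..m}. (1 / (lam k - z)) *
          cinner (blinfun_apply (PJ H lam j) u) (blinfun_apply X (blinfun_apply (PJ H lam k) v))))"
      by (simp add: y_def Xw cinner_add_right cinner_sum_right cinner_scaleC_right distrib_left)
    also have "\<dots> = (\<Sum>j\<in>{1..m}. (1 / (lam j - z)) * cinner (blinfun_apply (PJ H lam j) u) (blinfun_apply X w0))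
       + (\<Sum>j\<in>{1..m}. (1 / (lam j - z)) * (\<Sum>k\<in>{1..m}. (1 / (lam k - z)) *
          cinner (blinfun_apply (PJ H lam j) u) (blinfun_apply X (blinfun_apply (PJ H lam k) v))))"
      by (rule sum.distrib)
    finally show ?thesis .
  qed
  have e: "cinner u (blinfun_apply (resolvent H z) y)
      = cinner u (blinfun_apply R' (blinfun_apply Q y)) + cinner u (\<Sum>j\<in>{1..m}. (1 / (lam j - z)) *\<^sub>C blinfun_apply (PJ H lam j) y)"
    by (simp only: Ry cinner_add_right)
  note e' = e[unfolded t1 t2]
  show ?thesis using e' unfolding y_def w0_def R'_def Q_def .
qed

end

lemma contour_pole1:
  assumes S: "open S" and g: "g holomorphic_on S" and l: "l \<in> S" and vp: "valid_path \<gamma>"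
    and pi: "path_image \<gamma> \<subseteq> S - {l}" and loop: "pathfinish \<gamma> = pathstart \<gamma>"
    and zero: "\<And>w. w \<notin> S \<Longrightarrow> winding_number \<gamma> w = 0"
  shows "((\<lambda>z. (1 / (l - z)) * g z) has_contour_integral (- (2 * pi * \<i> * winding_number \<gamma> l * g l))) \<gamma>"
proof -
  have "((\<lambda>w. g w / (w - l)) has_contour_integral (2 * pi * \<i> * winding_number \<gamma> l * g l)) \<gamma>"
    by (rule Cauchy_integral_formula_global[OF S g l vp pi loop zero])
  hence "((\<lambda>w. - (g w / (w - l))) has_contour_integral (- (2 * pi * \<i> * winding_number \<gamma> l * g l))) \<gamma>"
    by (rule has_contour_integral_neg)
  thus ?thesis
  proof (rule has_contour_integral_eq)
    fix z assume "z \<in> path_image \<gamma>"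
    hence "z \<noteq> l" using pi by auto
    thus "- (g z / (z - l)) = (1 / (l - z)) * g z" by (simp add: field_simps)
  qed
qed

lemma contour_recip:
  assumes vp: "valid_path \<gamma>" and l: "l \<notin> path_image \<gamma>" and loop: "pathfinish \<gamma> = pathstart \<gamma>"
  shows "((\<lambda>z. 1 / (l - z)) has_contour_integral (- (2 * pi * \<i> * winding_number \<gamma> l))) \<gamma>"
proof -
  have "((\<lambda>z. (1 / (l - z)) * (\<lambda>_. 1) z) has_contour_integral (- (2 * pi * \<i> * winding_number \<gamma> l * 1))) \<gamma>"
    by (rule contour_pole1[of UNIV]) (use vp l loop in auto)
  thus ?thesis by simp
qed

lemma contour_pole2:
  assumes vp: "valid_path \<gamma>" and l1: "l1 \<notin> path_image \<gamma>" and l2: "l2 \<notin> path_image \<gamma>"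
    and loop: "pathfinish \<gamma> = pathstart \<gamma>" and w: "winding_number \<gamma> l1 = winding_number \<gamma> l2"
  shows "((\<lambda>z. (1 / (l1 - z)) * (1 / (l2 - z))) has_contour_integral 0) \<gamma>"
proof (cases "l1 = l2")
  case True
  have "((\<lambda>z. 1 / (l1 - z) ^ 2) has_contour_integral 0) \<gamma>"
  proof (rule Cauchy_theorem_primitive[of "UNIV - {l1}" "\<lambda>z. 1 / (l1 - z)"])
    fix x assume x: "x \<in> UNIV - {l1}"
    hence "l1 - x \<noteq> 0" by auto
    thus "((\<lambda>z. 1 / (l1 - z)) has_field_derivative 1 / (l1 - x) ^ 2) (at x within UNIV - {l1})"
      by (auto intro!: derivative_eq_intros simp: power2_eq_square field_simps)
  qed (use vp l1 loop in auto)
  thus ?thesis using True by (simp add: power2_eq_square)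
next
  case False
  have a: "((\<lambda>z. 1 / (l1 - z)) has_contour_integral (- (2 * pi * \<i> * winding_number \<gamma> l1))) \<gamma>"
    by (rule contour_recip[OF vp l1 loop])
  have b: "((\<lambda>z. 1 / (l2 - z)) has_contour_integral (- (2 * pi * \<i> * winding_number \<gamma> l2))) \<gamma>"
    by (rule contour_recip[OF vp l2 loop])
  have "((\<lambda>z. (1 / (l2 - l1)) * (1 / (l1 - z) - 1 / (l2 - z))) has_contour_integral
      ((1 / (l2 - l1)) * (- (2 * pi * \<i> * winding_number \<gamma> l1) - - (2 * pi * \<i> * winding_number \<gamma> l2)))) \<gamma>"
    by (intro has_contour_integral_lmul has_contour_integral_diff a b)
  hence "((\<lambda>z. (1 / (l2 - l1)) * (1 / (l1 - z) - 1 / (l2 - z))) has_contour_integral 0) \<gamma>"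
    using w by simp
  thus ?thesis
  proof (rule has_contour_integral_eq)
    fix z assume "z \<in> path_image \<gamma>"
    hence "z \<noteq> l1" "z \<noteq> l2" using l1 l2 by auto
    thus "(1 / (l2 - l1)) * (1 / (l1 - z) - 1 / (l2 - z)) = (1 / (l1 - z)) * (1 / (l2 - z))"
      using False by (simp add: field_simps)
  qed
qed

lemma real_ineq_final:
  fixes a b c d u v :: real
  assumes "a \<ge> 0" "b \<ge> 0" "c \<ge> 0" "d \<ge> 0" "u \<ge> 0" "v \<ge> 0"
    and "u^2 = a^2 + d^2" "v^2 = b^2 + c^2"
  shows "a * b + c * d \<le> u * v"
proof -
  have "(a * b + c * d)^2 \<le> (u * v)^2"
  proof -
    have "(u * v)^2 - (a * b + c * d)^2 = (a * c - b * d)^2"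
      using assms(7,8) by (simp add: power_mult_distrib algebra_simps power2_eq_square)
    thus ?thesis by (smt (verit) zero_le_power2)
  qed
  thus ?thesis using assms by (meson mult_nonneg_nonneg power2_le_imp_le)
qed

lemma sum_le_sqrt_card:
  fixes f :: "nat \<Rightarrow> real"
  assumes "\<And>i. i \<in> I \<Longrightarrow> f i \<ge> 0"
  shows "(\<Sum>i\<in>I. f i) \<le> sqrt (card I) * sqrt (\<Sum>i\<in>I. (f i)^2)"
proof -
  have "(\<Sum>i\<in>I. f i)^2 \<le> (\<Sum>i\<in>I. (f i)^2) * card I" by (rule sum_squared_le_sum_of_squares)
  hence "sqrt ((\<Sum>i\<in>I. f i)^2) \<le> sqrt ((\<Sum>i\<in>I. (f i)^2) * card I)" by (rule real_sqrt_le_mono)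
  moreover have "(\<Sum>i\<in>I. f i) \<ge> 0" using assms by (simp add: sum_nonneg)
  ultimately show ?thesis by (simp add: real_sqrt_mult mult.commute)
qed

theorem lemma7:
  fixes H X :: "'a::{complex_inner, complete_space} \<Rightarrow>\<^sub>L 'a"
    and lam :: "nat \<Rightarrow> complex" and m :: nat
    and \<Gamma> :: "real \<Rightarrow> complex"
  assumes H_sa: "self_adjoint_op H"
    and eig: "\<forall>j\<in>{1..m}. is_eigenvalue H (lam j)"
    and distinct: "inj_on lam {1..m}"
    and gap: "setdist (lam ` {1..m}) (op_spectrum H - lam ` {1..m}) > 0"
    and \<Gamma>_contour: "simple_path \<Gamma>" "valid_path \<Gamma>" "pathfinish \<Gamma> = pathstart \<Gamma>"
    and \<Gamma>_avoids: "path_image \<Gamma> \<inter> op_spectrum H = {}"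
    and \<Gamma>_encloses: "\<forall>j\<in>{1..m}. winding_number \<Gamma> (lam j) = 1"
    and \<Gamma>_excludes: "\<forall>z\<in>op_spectrum H - lam ` {1..m}. winding_number \<Gamma> z = 0"
    and X_bounded: "clinear_op X"
  shows "norm (tilde_op H \<Gamma> X)
           \<le> sqrt (real m) * norm X / setdist (lam ` {1..m}) (op_spectrum H - lam ` {1..m})"
proof -
  note ctx = H_sa eig distinct
  define g where "g = setdist (lam ` {1..m}) (op_spectrum H - lam ` {1..m})"
  have g0: "g > 0" using gap by (simp add: g_def)
  have Hc: "clinear_op H" using H_sa by (rule sa_clinear)
  have lam_spec: "lam j \<in> op_spectrum H" if j: "j \<in> {1..m}" for j
  proof -
    obtain x where x: "x \<noteq> 0" "blinfun_apply H x = lam j *\<^sub>C x" using eig j unfolding is_eigenvalue_def by blast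
    have "blinfun_apply (H - cscaleL (lam j) id_blinfun) x = 0" using x by (simp add: shift_apply)
    hence "\<not> invertible_op (H - cscaleL (lam j) id_blinfun)" using x(1) invertible_inj by blast
    thus ?thesis by (simp add: op_spectrum_def)
  qed
  have gdist: "g \<le> cmod (s - lam j)" if s: "s \<in> op_spectrum H - lam ` {1..m}" and j: "j \<in> {1..m}" for s j
  proof -
    have "g \<le> dist (lam j) s" unfolding g_def by (rule setdist_le_dist) (use s j in auto)
    thus ?thesis by (simp add: dist_norm norm_minus_commute)
  qed
  obtain B where B: "B > 0" "path_image \<Gamma> \<subseteq> ball 0 B"
    using bounded_subset_ballD[OF bounded_valid_path_image[OF \<Gamma>_contour(2)]] by blast
  obtain B2 where B2: "\<And>z. B2 \<le> norm z \<Longrightarrow> winding_number \<Gamma> z = 0"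
    using winding_number_zero_at_infinity[OF valid_path_imp_path[OF \<Gamma>_contour(2)] \<Gamma>_contour(3)] by blast
  define L where "L = (\<Sum>j\<in>{1..m}. cmod (lam j))"
  define c where "c = B + \<bar>B2\<bar> + L + g + 1"
  have L0: "L \<ge> 0" unfolding L_def by (simp add: sum_nonneg)
  have Lj: "cmod (lam j) \<le> L" if "j \<in> {1..m}" for j
    unfolding L_def by (rule member_le_sum) (use that in auto)
  have c0: "c > 0" using B(1) L0 g0 by (simp add: c_def)
  have cmodc: "cmod (complex_of_real c) = c" using c0 by simp
  have c_far: "g + 1 \<le> cmod (complex_of_real c - lam j)" if j: "j \<in> {1..m}" for j
  proof -
    have "cmod (complex_of_real c) - cmod (lam j) \<le> cmod (complex_of_real c - lam j)" by (rule norm_triangle_ineq2)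
    thus ?thesis using Lj[OF j] cmodc B(1) by (simp add: c_def)
  qed
  have c_notL: "complex_of_real c \<notin> lam ` {1..m}"
  proof
    assume "complex_of_real c \<in> lam ` {1..m}"
    then obtain j where j: "j \<in> {1..m}" "complex_of_real c = lam j" by blast
    thus False using c_far[OF j(1)] g0 by simp
  qed
  have B2c: "B2 \<le> c" using abs_ge_self[of B2] B(1) L0 g0 unfolding c_def by linarith
  have c_wind: "winding_number \<Gamma> (complex_of_real c) = 0"
    by (rule B2) (simp only: cmodc B2c)
  have c_path: "complex_of_real c \<notin> path_image \<Gamma>"
  proof
    assume "complex_of_real c \<in> path_image \<Gamma>"
    hence "cmod (complex_of_real c) < B" using B(2) by (auto simp: dist_norm)
    thus False using cmodc L0 g0 by (simp add: c_def)
  qed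
  define H' where "H' = HC H lam m c"
  have H'sa: "self_adjoint_op H'" unfolding H'_def by (rule HC_sa[OF ctx])
  have H'c: "clinear_op H'" using H'sa by (rule sa_clinear)
  have specH': "z \<in> op_spectrum H \<or> z = complex_of_real c" if "z \<in> op_spectrum H'" for z
    using HC_spec[OF ctx, of z c] that unfolding H'_def by blast
  have lam_notH': "lam j \<notin> op_spectrum H'" if j: "j \<in> {1..m}" for j
  proof -
    define lm where "lm = Re (lam j)"
    have lj: "lam j = complex_of_real lm" unfolding lm_def by (rule lam_real[OF ctx j])
    define D where "D = (\<lambda>k. cmod (lam k - lam j)) ` ({1..m} - {j})"
    define \<epsilon> where "\<epsilon> = Min (insert g D)"
    have finD: "finite (insert g D)" by (simp add: D_def)
    have Dpos: "\<forall>d\<in>insert g D. 0 < d"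
    proof
      fix d assume "d \<in> insert g D"
      then consider "d = g" | k where "k \<in> {1..m} - {j}" "d = cmod (lam k - lam j)" unfolding D_def by blast
      thus "0 < d"
      proof cases
        case 1 thus ?thesis using g0 by simp
      next
        case (2 k)
        have "lam k \<noteq> lam j" using distinct 2(1) j by (auto dest: inj_onD)
        thus ?thesis using 2(2) by simp
      qed
    qed
    have eps0: "\<epsilon> > 0" unfolding \<epsilon>_def using Min_gr_iff[OF finD] Dpos by blast
    have eps_g: "\<epsilon> \<le> g" unfolding \<epsilon>_def by (rule Min_le[OF finD]) simp
    have eps_D: "\<epsilon> \<le> cmod (lam k - lam j)" if "k \<in> {1..m}" "k \<noteq> j" for k
      unfolding \<epsilon>_def by (rule Min_le[OF finD]) (use that in \<open>auto simp: D_def\<close>)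
    have "complex_of_real lm \<notin> op_spectrum H'"
    proof (rule isolated_point_not_spectrum[OF H'sa _ eps0])
      fix x assume "blinfun_apply H' x = complex_of_real lm *\<^sub>C x"
      hence "blinfun_apply (HC H lam m c) x = lam j *\<^sub>C x" using lj by (simp add: H'_def)
      thus "x = 0" by (rule HC_ker[OF ctx c_notL j])
    next
      fix s assume s: "s \<in> op_spectrum H'"
      show "s = complex_of_real lm \<or> \<epsilon> \<le> cmod (s - complex_of_real lm)"
      proof (cases "s = complex_of_real c")
        case True
        thus ?thesis using c_far[OF j] eps_g lj by simp
      next
        case False
        hence sH: "s \<in> op_spectrum H" using specH'[OF s] by blast
        show ?thesis
        proof (cases "s \<in> lam ` {1..m}")
          case True
          then obtain k where k: "k \<in> {1..m}" "s = lam k" by blast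
          show ?thesis
          proof (cases "k = j")
            case True thus ?thesis using k lj by simp
          next
            case False thus ?thesis using eps_D[OF k(1) False] k lj by simp
          qed
        next
          case False
          hence "g \<le> cmod (s - lam j)" using gdist[OF _ j] sH by blast
          thus ?thesis using eps_g lj by simp
        qed
      qed
    qed
    thus ?thesis using lj by simp
  qed
  have spec_far: "g \<le> cmod (s - lam j)" if s: "s \<in> op_spectrum H'" and j: "j \<in> {1..m}" for s j
  proof (cases "s = complex_of_real c")
    case True thus ?thesis using c_far[OF j] by simp
  next
    case False
    hence sH: "s \<in> op_spectrum H" using specH'[OF s] by blast
    have "s \<notin> lam ` {1..m}" using lam_notH' s by blast
    thus ?thesis using gdist[OF _ j] sH by blast
  qed
  have Rbound: "norm (blinfun_apply (resolvent H' (lam j)) y) \<le> norm y / g" if j: "j \<in> {1..m}" for j y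
  proof -
    define lm where "lm = Re (lam j)"
    have lj: "lam j = complex_of_real lm" unfolding lm_def by (rule lam_real[OF ctx j])
    have "norm (resolvent H' (complex_of_real lm)) \<le> 1 / g"
    proof (rule sa_resolvent_norm[OF H'sa _ g0])
      show "complex_of_real lm \<notin> op_spectrum H'" using lam_notH'[OF j] lj by simp
      fix s assume "s \<in> op_spectrum H'"
      thus "g \<le> cmod (s - complex_of_real lm)" using spec_far[OF _ j] lj by simp
    qed
    hence "norm (resolvent H' (lam j)) \<le> 1 / g" using lj by simp
    hence "norm (blinfun_apply (resolvent H' (lam j)) y) \<le> (1 / g) * norm y"
      using norm_blinfun[of "resolvent H' (lam j)" y] by (meson mult_right_mono norm_ge_zero order_trans)
    thus ?thesis by simp
  qed
  define S where "S = - op_spectrum H'"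
  have Sopen: "open S" unfolding S_def by (rule open_resolvent_set[OF H'c])
  have SH: "S \<inter> op_spectrum H' = {}" by (simp add: S_def)
  have pathH: "z \<notin> op_spectrum H" if "z \<in> path_image \<Gamma>" for z using \<Gamma>_avoids that by blast
  have pathS: "path_image \<Gamma> \<subseteq> S"
  proof
    fix z assume z: "z \<in> path_image \<Gamma>"
    have "z \<noteq> complex_of_real c" using c_path z by blast
    thus "z \<in> S" using specH' pathH[OF z] by (auto simp: S_def)
  qed
  have windS: "winding_number \<Gamma> w = 0" if "w \<notin> S" for w
  proof -
    have w: "w \<in> op_spectrum H'" using that by (simp add: S_def)
    show ?thesis
    proof (cases "w = complex_of_real c")
      case True thus ?thesis using c_wind by simp
    next
      case False
      hence "w \<in> op_spectrum H" using specH'[OF w] by blast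
      moreover have "w \<notin> lam ` {1..m}" using lam_notH' w by blast
      ultimately show ?thesis using \<Gamma>_excludes by blast
    qed
  qed
  have lamS: "lam j \<in> S" if "j \<in> {1..m}" for j using lam_notH'[OF that] by (simp add: S_def)
  have lam_path: "lam j \<notin> path_image \<Gamma>" if "j \<in> {1..m}" for j using pathH lam_spec[OF that] by blast
  have key: "cmod (cinner u (blinfun_apply (tilde_op H \<Gamma> X) v)) \<le> sqrt (real m) * norm X * (norm u * norm v) / g" for u v
  proof -
    define R' where "R' z = resolvent H' z" for z
    define Q where "Q = QS H lam m"
    define P where "P j = PJ H lam j" for j
    define g0f where "g0f z = cinner u (blinfun_apply (R' z) (blinfun_apply Q (blinfun_apply X (blinfun_apply (R' z) (blinfun_apply Q v)))))" for z
    define g2 where "g2 k z = cinner u (blinfun_apply (R' z) (blinfun_apply Q (blinfun_apply X (blinfun_apply (P k) v))))" for k z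
    define g1 where "g1 j z = cinner (blinfun_apply (P j) u) (blinfun_apply X (blinfun_apply (R' z) (blinfun_apply Q v)))" for j z
    define cc where "cc j k = cinner (blinfun_apply (P j) u) (blinfun_apply X (blinfun_apply (P k) v))" for j k
    define F where "F z = cinner u (blinfun_apply (resolvent H z) (blinfun_apply X (blinfun_apply (resolvent H z) v)))" for z
    have Qc: "clinear_op Q" unfolding Q_def by (rule QS_clinear[OF ctx])
    have hol0: "g0f holomorphic_on S"
    proof -
      have "(\<lambda>z. cinner u (blinfun_apply (resolvent H' z) (blinfun_apply (Q o\<^sub>L X) (blinfun_apply (resolvent H' z) (blinfun_apply Q v))))) holomorphic_on S"
        by (rule holo_res2[OF H'c clinear_compose[OF Qc X_bounded] Sopen SH])
      thus ?thesis by (simp add: g0f_def[abs_def] R'_def)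
    qed
    have hol2: "g2 k holomorphic_on S" for k
    proof -
      have "(\<lambda>z. cinner u (blinfun_apply id_blinfun (blinfun_apply (resolvent H' z) (blinfun_apply Q (blinfun_apply X (blinfun_apply (P k) v)))))) holomorphic_on S"
        by (rule holo_res1[OF H'c clinear_id Sopen SH])
      thus ?thesis by (simp add: g2_def[abs_def] R'_def)
    qed
    have hol1: "g1 j holomorphic_on S" for j
    proof -
      have "(\<lambda>z. cinner (blinfun_apply (P j) u) (blinfun_apply X (blinfun_apply (resolvent H' z) (blinfun_apply Q v)))) holomorphic_on S"
        by (rule holo_res1[OF H'c X_bounded Sopen SH])
      thus ?thesis by (simp add: g1_def[abs_def] R'_def)
    qed
    have I0: "(g0f has_contour_integral 0) \<Gamma>"
      by (rule Cauchy_theorem_global[OF Sopen hol0 \<Gamma>_contour(2) \<Gamma>_contour(3) pathS windS])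
    have I2: "((\<lambda>z. (1 / (lam k - z)) * g2 k z) has_contour_integral (- (2 * pi * \<i> * g2 k (lam k)))) \<Gamma>"
      if k: "k \<in> {1..m}" for k
    proof -
      have ps: "path_image \<Gamma> \<subseteq> S - {lam k}" using pathS lam_path[OF k] by blast
      have "((\<lambda>z. (1 / (lam k - z)) * g2 k z) has_contour_integral (- (2 * pi * \<i> * winding_number \<Gamma> (lam k) * g2 k (lam k)))) \<Gamma>"
        by (rule contour_pole1[OF Sopen hol2 lamS[OF k] \<Gamma>_contour(2) ps \<Gamma>_contour(3) windS])
      thus ?thesis using \<Gamma>_encloses k by simp
    qed
    have I1: "((\<lambda>z. (1 / (lam j - z)) * g1 j z) has_contour_integral (- (2 * pi * \<i> * g1 j (lam j)))) \<Gamma>"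
      if j: "j \<in> {1..m}" for j
    proof -
      have ps: "path_image \<Gamma> \<subseteq> S - {lam j}" using pathS lam_path[OF j] by blast
      have "((\<lambda>z. (1 / (lam j - z)) * g1 j z) has_contour_integral (- (2 * pi * \<i> * winding_number \<Gamma> (lam j) * g1 j (lam j)))) \<Gamma>"
        by (rule contour_pole1[OF Sopen hol1 lamS[OF j] \<Gamma>_contour(2) ps \<Gamma>_contour(3) windS])
      thus ?thesis using \<Gamma>_encloses j by simp
    qed
    have I3: "((\<lambda>z. (1 / (lam j - z)) * (\<Sum>k\<in>{1..m}. (1 / (lam k - z)) * cc j k)) has_contour_integral 0) \<Gamma>"
      if j: "j \<in> {1..m}" for j
    proof -
      have each: "((\<lambda>z. (1 / (lam j - z)) * (1 / (lam k - z)) * cc j k) has_contour_integral 0) \<Gamma>"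
        if k: "k \<in> {1..m}" for k
      proof -
        have w: "winding_number \<Gamma> (lam j) = winding_number \<Gamma> (lam k)" using \<Gamma>_encloses j k by simp
        show ?thesis
          using has_contour_integral_rmul[OF contour_pole2[OF \<Gamma>_contour(2) lam_path[OF j] lam_path[OF k] \<Gamma>_contour(3) w], of "cc j k"]
          by simp
      qed
      have "((\<lambda>z. \<Sum>k\<in>{1..m}. (1 / (lam j - z)) * (1 / (lam k - z)) * cc j k) has_contour_integral (\<Sum>k\<in>{1..m}. 0)) \<Gamma>"
        by (rule has_contour_integral_sum) (simp, erule each)
      hence "((\<lambda>z. \<Sum>k\<in>{1..m}. (1 / (lam j - z)) * (1 / (lam k - z)) * cc j k) has_contour_integral 0) \<Gamma>" by simp
      thus ?thesis by (rule has_contour_integral_eq) (simp add: sum_distrib_left mult.assoc)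
    qed
    have I2s: "((\<lambda>z. \<Sum>k\<in>{1..m}. (1 / (lam k - z)) * g2 k z) has_contour_integral (\<Sum>k\<in>{1..m}. - (2 * pi * \<i> * g2 k (lam k)))) \<Gamma>"
      by (rule has_contour_integral_sum) (simp, erule I2)
    have I1s: "((\<lambda>z. \<Sum>j\<in>{1..m}. (1 / (lam j - z)) * g1 j z) has_contour_integral (\<Sum>j\<in>{1..m}. - (2 * pi * \<i> * g1 j (lam j)))) \<Gamma>"
      by (rule has_contour_integral_sum) (simp, erule I1)
    have I3s: "((\<lambda>z. \<Sum>j\<in>{1..m}. (1 / (lam j - z)) * (\<Sum>k\<in>{1..m}. (1 / (lam k - z)) * cc j k)) has_contour_integral (\<Sum>j\<in>{1..m}. 0)) \<Gamma>"
      by (rule has_contour_integral_sum) (simp, erule I3)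
    define I where "I = 0 + (\<Sum>k\<in>{1..m}. - (2 * pi * \<i> * g2 k (lam k))) + ((\<Sum>j\<in>{1..m}. - (2 * pi * \<i> * g1 j (lam j))) + (\<Sum>j\<in>{1..m}. 0))"
    have Itot: "(F has_contour_integral I) \<Gamma>"
    proof -
      have "((\<lambda>z. g0f z + (\<Sum>k\<in>{1..m}. (1 / (lam k - z)) * g2 k z)
          + ((\<Sum>j\<in>{1..m}. (1 / (lam j - z)) * g1 j z) + (\<Sum>j\<in>{1..m}. (1 / (lam j - z)) * (\<Sum>k\<in>{1..m}. (1 / (lam k - z)) * cc j k))))
          has_contour_integral I) \<Gamma>"
        unfolding I_def by (intro has_contour_integral_add I0 I2s I1s I3s)
      thus ?thesis
      proof (rule has_contour_integral_eq)
        fix z assume z: "z \<in> path_image \<Gamma>"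
        have zH: "z \<notin> op_spectrum H" by (rule pathH[OF z])
        have zc: "z \<notin> op_spectrum (HC H lam m c)" using pathS z by (auto simp: S_def H'_def)
        have zl: "z \<notin> lam ` {1..m}" using zH lam_spec by blast
        show "g0f z + (\<Sum>k\<in>{1..m}. (1 / (lam k - z)) * g2 k z)
          + ((\<Sum>j\<in>{1..m}. (1 / (lam j - z)) * g1 j z) + (\<Sum>j\<in>{1..m}. (1 / (lam j - z)) * (\<Sum>k\<in>{1..m}. (1 / (lam k - z)) * cc j k)))
          = F z"
          unfolding F_def F_expand[OF ctx X_bounded zH zc zl]
          by (simp only: g0f_def g2_def g1_def cc_def R'_def Q_def P_def H'_def)
      qed
    qed
    have Isimp: "I = - (2 * pi * \<i>) * ((\<Sum>k\<in>{1..m}. g2 k (lam k)) + (\<Sum>j\<in>{1..m}. g1 j (lam j)))"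
      by (simp add: I_def sum_negf sum_distrib_left algebra_simps)
    define val where "val = - ((\<Sum>k\<in>{1..m}. g2 k (lam k)) + (\<Sum>j\<in>{1..m}. g1 j (lam j)))"
    define Mop where "Mop z = resolvent H z o\<^sub>L X o\<^sub>L resolvent H z" for z
    define G where "G t = cscaleL (vector_derivative \<Gamma> (at t within {0..1})) (Mop (\<Gamma> t))" for t
    have tdef: "tilde_op H \<Gamma> X = cscaleL (1 / (2 * complex_of_real pi * \<i>)) (integral {0..1} G)"
      unfolding tilde_op_def op_contour_integral_def G_def Mop_def ..
    have bnd_val: "cmod val \<le> sqrt (real m) * norm X * (norm u * norm v) / g"
    proof -
      have b2: "cmod (g2 k (lam k)) \<le> (norm (blinfun_apply Q u) * norm X / g) * norm (blinfun_apply (P k) v)"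
        if k: "k \<in> {1..m}" for k
      proof -
        define y where "y = blinfun_apply X (blinfun_apply (P k) v)"
        have "g2 k (lam k) = cinner u (blinfun_apply Q (blinfun_apply (R' (lam k)) y))"
          unfolding g2_def y_def R'_def H'_def Q_def by (subst resHC_QS_commute[OF ctx]) (use lam_notH'[OF k] H'_def in auto)
        also have "\<dots> = cinner (blinfun_apply Q u) (blinfun_apply (R' (lam k)) y)"
          unfolding Q_def by (rule QS_sa[OF ctx, symmetric])
        finally have "cmod (g2 k (lam k)) \<le> norm (blinfun_apply Q u) * norm (blinfun_apply (R' (lam k)) y)"
          using cinner_Cauchy_Schwarz by simp
        also have "\<dots> \<le> norm (blinfun_apply Q u) * (norm y / g)"
          by (intro mult_left_mono) (auto simp: R'_def Rbound[OF k])
        also have "norm y \<le> norm X * norm (blinfun_apply (P k) v)" unfolding y_def by (rule norm_blinfun)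
        hence "norm (blinfun_apply Q u) * (norm y / g) \<le> norm (blinfun_apply Q u) * (norm X * norm (blinfun_apply (P k) v) / g)"
          using g0 by (intro mult_left_mono divide_right_mono) auto
        finally show ?thesis by (simp add: algebra_simps)
      qed
      have b1: "cmod (g1 j (lam j)) \<le> (norm X * norm (blinfun_apply Q v) / g) * norm (blinfun_apply (P j) u)"
        if j: "j \<in> {1..m}" for j
      proof -
        have "cmod (g1 j (lam j)) \<le> norm (blinfun_apply (P j) u) * norm (blinfun_apply X (blinfun_apply (R' (lam j)) (blinfun_apply Q v)))"
          unfolding g1_def by (rule cinner_Cauchy_Schwarz)
        also have "\<dots> \<le> norm (blinfun_apply (P j) u) * (norm X * norm (blinfun_apply (R' (lam j)) (blinfun_apply Q v)))"
          by (intro mult_left_mono norm_blinfun) simp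
        also have "\<dots> \<le> norm (blinfun_apply (P j) u) * (norm X * (norm (blinfun_apply Q v) / g))"
          by (intro mult_left_mono) (auto simp: R'_def Rbound[OF j])
        finally show ?thesis by (simp add: algebra_simps)
      qed
      have sq: "(\<Sum>k\<in>{1..m}. norm (blinfun_apply (P k) x)) \<le> sqrt (real m) * norm (blinfun_apply (PS H lam m) x)" for x
      proof -
        have "(\<Sum>k\<in>{1..m}. norm (blinfun_apply (P k) x)) \<le> sqrt (card {1..m}) * sqrt (\<Sum>k\<in>{1..m}. (norm (blinfun_apply (P k) x))^2)"
          by (rule sum_le_sqrt_card) simp
        also have "(\<Sum>k\<in>{1..m}. (norm (blinfun_apply (P k) x))^2) = (norm (blinfun_apply (PS H lam m) x))^2"
          unfolding P_def by (rule norm_PS[OF ctx, symmetric])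
        finally show ?thesis by simp
      qed
      have "cmod val \<le> (\<Sum>k\<in>{1..m}. cmod (g2 k (lam k))) + (\<Sum>j\<in>{1..m}. cmod (g1 j (lam j)))"
        unfolding val_def norm_minus_cancel
        by (rule order_trans[OF norm_triangle_ineq add_mono[OF norm_sum norm_sum]])
      also have "\<dots> \<le> (\<Sum>k\<in>{1..m}. (norm (blinfun_apply Q u) * norm X / g) * norm (blinfun_apply (P k) v))
          + (\<Sum>j\<in>{1..m}. (norm X * norm (blinfun_apply Q v) / g) * norm (blinfun_apply (P j) u))"
        by (intro add_mono sum_mono b1 b2) auto
      also have "\<dots> = (norm (blinfun_apply Q u) * norm X / g) * (\<Sum>k\<in>{1..m}. norm (blinfun_apply (P k) v))
          + (norm X * norm (blinfun_apply Q v) / g) * (\<Sum>j\<in>{1..m}. norm (blinfun_apply (P j) u))"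
        by (simp add: sum_distrib_left)
      also have "\<dots> \<le> (norm (blinfun_apply Q u) * norm X / g) * (sqrt (real m) * norm (blinfun_apply (PS H lam m) v))
          + (norm X * norm (blinfun_apply Q v) / g) * (sqrt (real m) * norm (blinfun_apply (PS H lam m) u))"
        using g0 by (intro add_mono mult_left_mono sq) auto
      also have "\<dots> = sqrt (real m) * norm X / g * (norm (blinfun_apply Q u) * norm (blinfun_apply (PS H lam m) v)
          + norm (blinfun_apply Q v) * norm (blinfun_apply (PS H lam m) u))"
        by (simp add: algebra_simps)
      also have "\<dots> \<le> sqrt (real m) * norm X / g * (norm u * norm v)"
      proof (rule mult_left_mono)
        show "norm (blinfun_apply Q u) * norm (blinfun_apply (PS H lam m) v)
          + norm (blinfun_apply Q v) * norm (blinfun_apply (PS H lam m) u) \<le> norm u * norm v"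
        proof (rule real_ineq_final)
          show "(norm u)^2 = (norm (blinfun_apply Q u))^2 + (norm (blinfun_apply (PS H lam m) u))^2"
            using norm_split[OF ctx, of u] unfolding Q_def by linarith
          show "(norm v)^2 = (norm (blinfun_apply (PS H lam m) v))^2 + (norm (blinfun_apply Q v))^2"
            using norm_split[OF ctx, of v] unfolding Q_def by linarith
        qed auto
      qed (use g0 in simp)
      finally show ?thesis by simp
    qed
    show ?thesis
    proof (cases "G integrable_on {0..1}")
      case False
      hence "integral {0..1} G = 0" by (rule not_integrable_integral)
      hence "tilde_op H \<Gamma> X = cscaleL (1 / (2 * complex_of_real pi * \<i>)) 0" using tdef by simp
      hence "blinfun_apply (tilde_op H \<Gamma> X) v = 0" by simp
      thus ?thesis using g0 by simp
    next
      case True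
      have bl: "bounded_linear (\<lambda>A. cinner u (blinfun_apply A v))"
        by (rule bounded_linear_compose[OF bounded_bilinear.bounded_linear_right[OF bounded_bilinear_cinner] blinfun.bounded_linear_left])
      have "cinner u (blinfun_apply (integral {0..1} G) v) = integral {0..1} ((\<lambda>A. cinner u (blinfun_apply A v)) \<circ> G)"
        using integral_linear[OF True bl] by simp
      also have "((\<lambda>A. cinner u (blinfun_apply A v)) \<circ> G) = (\<lambda>t. F (\<Gamma> t) * vector_derivative \<Gamma> (at t within {0..1}))"
        by (rule ext) (simp add: G_def Mop_def F_def cinner_scaleC_right mult.commute)
      also have "integral {0..1} \<dots> = I"
        using Itot unfolding has_contour_integral_def by (rule integral_unique)
      finally have ci: "cinner u (blinfun_apply (integral {0..1} G) v) = I" .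
      have "cinner u (blinfun_apply (tilde_op H \<Gamma> X) v) = (1 / (2 * complex_of_real pi * \<i>)) * I"
        by (simp add: tdef cinner_scaleC_right ci)
      also have "\<dots> = val" by (simp add: Isimp val_def)
      finally show ?thesis using bnd_val by simp
    qed
  qed
  have "norm (tilde_op H \<Gamma> X) \<le> sqrt (real m) * norm X / g"
  proof (rule norm_blinfun_bound)
    show "0 \<le> sqrt (real m) * norm X / g" using g0 by simp
    fix v
    show "norm (blinfun_apply (tilde_op H \<Gamma> X) v) \<le> sqrt (real m) * norm X / g * norm v"
    proof (rule norm_le_from_cinner)
      fix u
      show "cmod (cinner u (blinfun_apply (tilde_op H \<Gamma> X) v)) \<le> sqrt (real m) * norm X / g * norm v * norm u"
        using key[of u v] by (simp add: algebra_simps)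
    qed (use g0 in simp)
  qed
  thus ?thesis by (simp add: g_def)
qed

end
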